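(* Let $\mathfrak{T}$ be a triangulation of the strip and $t=\Phi(\mathfrak{T})$. For $j\in\mathbb{Z}$ let $\gamma_j$ be the number of triangles of $\mathfrak{T}$ incident with the vertex $j^\circ$, i.e. $\gamma_j=1+\#\{\text{arcs of }\mathfrak{T}\text{ with endpoint } j^\circ\}$. Then for all $j,a\in\mathbb{Z}$, $t_{j-1,a}+t_{j+1,a}=\gamma_j\,t_{ja}$, and moreover $\gamma_j=c_{j-1,j+1}$.
   Context: Vertices of the strip: two disjoint copies of $\mathbb{Z}$, written $\mathbb{Z}^\circ=\{p^\circ: p\in\mathbb{Z}\}$ (upper edge) and $\mathbb{Z}_\circ=\{q_\circ : q\in\mathbb{Z}\}$ (lower edge); $p^\circ$ is the point $(-p,1)$ and $q_\circ$ the point $(q,-1)$ of $\mathbb{R}\times[-1,1]$. A connecting arc is a pair $(p^\circ,q_\circ)$; an internal arc is a pair $(p^\circ,q^\circ)$ or $(p_\circ,q_\circ)$ with $p\le q-2$. Two distinct arcs cross exactly in the following cases: connecting arcs $(p^\circ,q_\circ),(p'^\circ,q'_\circ)$ cross iff $(p-p')(q-q')>0$; internal arcs $(a^\circ,b^\circ),(c^\circ,d^\circ)$ cross iff $a<c<b<d$ or $c<a<d<b$ (same for lower internal arcs); $(a^\circ,b^\circ)$ crosses $(p^\circ,q_\circ)$ iff $a<p<b$; $(a_\circ,b_\circ)$ crosses $(p^\circ,q_\circ)$ iff $a<q<b$; upper and lower internal arcs never cross. A triangulation of the strip is a maximal set $\mathfrak{T}$ of pairwise non-crossing arcs such that for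 every $(i,j)\in\mathbb{Z}^2$ there are $(p^\circ,q_\circ),(p'^\circ,q'_\circ)\in\mathfrak{T}$ with $p<i,\ q>j$ and $p'>i,\ q'<j$. Friese numbers: for a convex polygon with vertices $v_0,\dots,v_n$ in cyclic order and triangulation $\mathcal{X}$, with $a_l$ the number of triangles at $v_l$, set $\mathcal{X}(v_k,v_l)=m_k(l)$ where $m_k(k)=0$, $m_k(k+1)=1$, $m_k(l+1)=a_lm_k(l)-m_k(l-1)$ (indices mod $n+1$). $\Phi(\mathfrak{T})_{ij}$: choose $(p^\circ,q_\circ),(r^\circ,s_\circ)\in\mathfrak{T}$ with $p<i<r$, $s<j<q$, let $P$ be the polygon with vertices in cyclic order $p^\circ,\dots,r^\circ,s_\circ,\dots,q_\circ$, $\mathfrak{T}_P$ the triangulation of $P$ by the arcs of $\mathfrak{T}$ that are diagonals of $P$, and set $\Phi(\mathfrak{T})_{ij}=\mathfrak{T}_P(i^\circ,j_\circ)$. For an $\mathrm{SL}_2$-tiling $t$ and $i<j$, $c_{ij}=t_{ia}t_{j,a+1}-t_{i,a+1}t_{ja}$ for any integer $a$ (independent of $a$). *)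

theory Defs
  imports Main
begin

text \<open>Up p is the upper vertex p-circle at (-p,1); Lo q is the lower vertex q-circle at (q,-1).\<close>
datatype vert = Up int | Lo int

datatype arc = Conn int int | UpA int int | LoA int int

fun valid_arc :: "arc \<Rightarrow> bool" where
  "valid_arc (Conn p q) = True"
| "valid_arc (UpA a b) = (a \<le> b - 2)"
| "valid_arc (LoA a b) = (a \<le> b - 2)"

fun ends :: "arc \<Rightarrow> vert set" where
  "ends (Conn p q) = {Up p, Lo q}"
| "ends (UpA a b) = {Up a, Up b}"
| "ends (LoA a b) = {Lo a, Lo b}"

fun cross :: "arc \<Rightarrow> arc \<Rightarrow> bool" where
  "cross (Conn p q) (Conn p' q') = ((p - p') * (q - q') > 0)"
| "cross (UpA a b) (UpA c d) = (a < c \<and> c < b \<and> b < d \<or> c < a \<and> a < d \<and> d < b)"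
| "cross (LoA a b) (LoA c d) = (a < c \<and> c < b \<and> b < d \<or> c < a \<and> a < d \<and> d < b)"
| "cross (UpA a b) (Conn p q) = (a < p \<and> p < b)"
| "cross (Conn p q) (UpA a b) = (a < p \<and> p < b)"
| "cross (LoA a b) (Conn p q) = (a < q \<and> q < b)"
| "cross (Conn p q) (LoA a b) = (a < q \<and> q < b)"
| "cross (UpA a b) (LoA c d) = False"
| "cross (LoA a b) (UpA c d) = False"

definition triangulation :: "arc set \<Rightarrow> bool" where
  "triangulation T \<longleftrightarrow>
     (\<forall>\<alpha>\<in>T. valid_arc \<alpha>) \<and>
     (\<forall>\<alpha>\<in>T. \<forall>\<beta>\<in>T. \<alpha> \<noteq> \<beta> \<longrightarrow> \<not> cross \<alpha> \<beta>) \<and>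
     (\<forall>\<alpha>. valid_arc \<alpha> \<and> \<alpha> \<notin> T \<longrightarrow> (\<exists>\<beta>\<in>T. \<alpha> \<noteq> \<beta> \<and> cross \<alpha> \<beta>)) \<and>
     (\<forall>i j. (\<exists>p q. Conn p q \<in> T \<and> p < i \<and> q > j) \<and>
            (\<exists>p' q'. Conn p' q' \<in> T \<and> p' > i \<and> q' < j))"

text \<open>A polygon is given by the list vs of its vertices v_0,...,v_n in cyclic order;
  a triangulation by its set D of diagonals (2-element vertex sets).\<close>

definition poly_edges :: "'v list \<Rightarrow> 'v set set" where
  "poly_edges vs = {{vs ! i, vs ! ((i + 1) mod length vs)} | i. i < length vs}"

definition poly_triangles :: "'v list \<Rightarrow> 'v set set \<Rightarrow> 'v set set" where
  "poly_triangles vs D = {S. S \<subseteq> set vs \<and> card S = 3 \<and>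
      (\<forall>x\<in>S. \<forall>y\<in>S. x \<noteq> y \<longrightarrow> {x, y} \<in> poly_edges vs \<union> D)}"

definition tri_at :: "'v list \<Rightarrow> 'v set set \<Rightarrow> nat \<Rightarrow> int" where
  "tri_at vs D l = int (card {S \<in> poly_triangles vs D. vs ! l \<in> S})"

text \<open>mseq a N k d = m_k(k+d), with m_k(k)=0, m_k(k+1)=1,
  m_k(l+1) = a_l m_k(l) - m_k(l-1), indices mod N = n+1.\<close>
fun mseq :: "(nat \<Rightarrow> int) \<Rightarrow> nat \<Rightarrow> nat \<Rightarrow> nat \<Rightarrow> int" where
  "mseq a N k 0 = 0"
| "mseq a N k (Suc 0) = 1"
| "mseq a N k (Suc (Suc d)) = a ((k + d + 1) mod N) * mseq a N k (Suc d) - mseq a N k d"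

definition vidx :: "'v list \<Rightarrow> 'v \<Rightarrow> nat" where
  "vidx vs x = (THE k. k < length vs \<and> vs ! k = x)"

definition friese :: "'v list \<Rightarrow> 'v set set \<Rightarrow> 'v \<Rightarrow> 'v \<Rightarrow> int" where
  "friese vs D x y =
     (let N = length vs; k = vidx vs x; l = vidx vs y
      in mseq (tri_at vs D) N k ((l + N - k) mod N))"

definition strip_poly :: "int \<Rightarrow> int \<Rightarrow> int \<Rightarrow> int \<Rightarrow> vert list" where
  "strip_poly p r s q = map Up [p..r] @ map Lo [s..q]"

definition poly_diags :: "arc set \<Rightarrow> vert list \<Rightarrow> vert set set" where
  "poly_diags T vs = {ends \<alpha> | \<alpha>. \<alpha> \<in> T \<and> ends \<alpha> \<subseteq> set vs} - poly_edges vs"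

definition Phi :: "arc set \<Rightarrow> int \<Rightarrow> int \<Rightarrow> int" where
  "Phi T i j = (SOME v. \<exists>p q r s. Conn p q \<in> T \<and> Conn r s \<in> T \<and>
       p < i \<and> i < r \<and> s < j \<and> j < q \<and>
       v = friese (strip_poly p r s q) (poly_diags T (strip_poly p r s q)) (Up i) (Lo j))"

definition gamma :: "arc set \<Rightarrow> int \<Rightarrow> int" where
  "gamma T j = 1 + int (card {\<alpha> \<in> T. Up j \<in> ends \<alpha>})"

end

theory Submission
  imports Defs
begin


datatype m2 = Mat int int int int

fun mmul :: "m2 \<Rightarrow> m2 \<Rightarrow> m2" where
  "mmul (Mat a b c d) (Mat e f g h) = Mat (a*e+b*g) (a*f+b*h) (c*e+d*g) (c*f+d*h)"

fun mneg :: "m2 \<Rightarrow> m2" where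
  "mneg (Mat a b c d) = Mat (-a) (-b) (-c) (-d)"

definition I2 :: m2 where "I2 = Mat 1 0 0 1"
definition MM :: "int \<Rightarrow> m2" where "MM x = Mat x (-1) 1 0"

fun e11 :: "m2 \<Rightarrow> int" where "e11 (Mat a b c d) = a"
fun e21 :: "m2 \<Rightarrow> int" where "e21 (Mat a b c d) = c"

fun prodl :: "int list \<Rightarrow> m2" where
  "prodl [] = I2"
| "prodl (x # xs) = mmul (prodl xs) (MM x)"

lemma mmul_assoc: "mmul (mmul A B) C = mmul A (mmul B C)"
  by (cases A; cases B; cases C) (simp add: algebra_simps)

lemma mmul_I2[simp]: "mmul A I2 = A" "mmul I2 A = A"
  by (cases A; simp add: I2_def)+

lemma mneg_mmul[simp]: "mmul (mneg A) B = mneg (mmul A B)" "mmul A (mneg B) = mneg (mmul A B)"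
  by (cases A; cases B; simp)+

lemma mneg_mneg[simp]: "mneg (mneg A) = A" by (cases A) simp

lemma prodl_append: "prodl (xs @ ys) = mmul (prodl ys) (prodl xs)"
  by (induction xs) (simp_all add: mmul_assoc)

lemma MM_add: "MM (a + b) = mneg (mmul (mmul (MM a) (MM 0)) (MM b))"
  by (simp add: MM_def algebra_simps)

lemma MM0_sq: "mmul (MM 0) (MM 0) = mneg I2"
  by (simp add: MM_def I2_def)

lemma glue_core:
  assumes "mmul (mmul (MM gy) X) (MM gx) = mneg I2"
  shows "mmul (mmul (MM (fy + gy)) X) (MM (fx + gx)) = mmul (MM fy) (MM fx)"
proof -
  have "mmul (mmul (MM (fy + gy)) X) (MM (fx + gx))
      = mmul (MM fy) (mmul (MM 0) (mmul (mmul (mmul (MM gy) X) (MM gx)) (mmul (MM 0) (MM fx))))"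
  proof -
    have "MM (fx + gx) = mneg (mmul (mmul (MM gx) (MM 0)) (MM fx))"
      using MM_add[of gx fx] by (simp add: add.commute)
    then show ?thesis by (simp add: MM_add[of fy gy] mmul_assoc)
  qed
  also have "\<dots> = mmul (MM fy) (MM fx)"
    using assms by (simp add: mmul_assoc MM0_sq[unfolded mmul_assoc] flip: mmul_assoc)
  finally show ?thesis .
qed

lemma glue:
  assumes "prodl (map g (x # B @ [y])) = mneg I2"
    and "\<forall>v\<in>set S1. f' v = f v" "\<forall>v\<in>set S2. f' v = f v" "\<forall>v\<in>set B. f' v = g v"
    and "f' x = f x + g x" "f' y = f y + g y"
  shows "prodl (map f' (S1 @ x # B @ y # S2)) = prodl (map f (S1 @ x # y # S2))"
proof -
  have m1: "map f' S1 = map f S1" "map f' S2 = map f S2" "map f' B = map g B"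
    using assms(2-4) by auto
  have h: "mmul (mmul (MM (g y)) (prodl (map g B))) (MM (g x)) = mneg I2"
    using assms(1) by (simp add: prodl_append mmul_assoc)
  have "prodl (map f' (S1 @ x # B @ y # S2)) =
     mmul (prodl (map f S2)) (mmul (mmul (mmul (MM (f y + g y)) (prodl (map g B))) (MM (f x + g x))) (prodl (map f S1)))"
    using assms(5,6) by (simp add: m1 prodl_append mmul_assoc)
  also have "\<dots> = mmul (prodl (map f S2)) (mmul (mmul (MM (f y)) (MM (f x))) (prodl (map f S1)))"
    using glue_core[OF h] by simp
  also have "\<dots> = prodl (map f (S1 @ x # y # S2))"
    by (simp add: prodl_append mmul_assoc)
  finally show ?thesis .
qed




fun cp :: "'v list \<Rightarrow> 'v set set" where
  "cp (x # y # zs) = insert {x, y} (cp (y # zs))"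
| "cp _ = {}"

lemma cp_idx: "{{xs ! i, xs ! Suc i} | i. Suc i < length xs} = cp xs"
proof (induction xs rule: cp.induct)
  case (1 x y zs)
  have "{{(x # y # zs) ! i, (x # y # zs) ! Suc i} | i. Suc i < length (x # y # zs)}
     = insert {x, y} {{(y # zs) ! i, (y # zs) ! Suc i} | i. Suc i < length (y # zs)}"
    apply (rule set_eqI) apply (rule iffI)
     apply (clarsimp) apply (case_tac i) apply auto[2]
    apply auto
     apply (rule_tac x=0 in exI, simp)
    apply (rule_tac x="Suc i" in exI, simp)
    done
  then show ?case using 1 by simp
qed auto

lemma poly_edges_cp: "vs \<noteq> [] \<Longrightarrow> poly_edges vs = cp vs \<union> {{last vs, hd vs}}"
proof -
  assume ne: "vs \<noteq> []"
  have "poly_edges vs = {{vs ! i, vs ! Suc i} | i. Suc i < length vs} \<union> {{last vs, hd vs}}"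
    unfolding poly_edges_def
  proof (rule set_eqI, rule iffI)
    fix e assume "e \<in> {{vs ! i, vs ! ((i + 1) mod length vs)} |i. i < length vs}"
    then obtain i where i: "i < length vs" "e = {vs ! i, vs ! ((i + 1) mod length vs)}" by auto
    show "e \<in> {{vs ! i, vs ! Suc i} | i. Suc i < length vs} \<union> {{last vs, hd vs}}"
    proof (cases "Suc i < length vs")
      case True then show ?thesis using i by auto
    next
      case False
      then have "Suc i = length vs" using i by simp
      then have "(i + 1) mod length vs = 0" "i = length vs - 1" by auto
      then show ?thesis using i ne by (simp add: last_conv_nth hd_conv_nth)
    qed
  next
    fix e assume "e \<in> {{vs ! i, vs ! Suc i} | i. Suc i < length vs} \<union> {{last vs, hd vs}}"
    then show "e \<in> {{vs ! i, vs ! ((i + 1) mod length vs)} |i. i < length vs}"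
    proof
      assume "e \<in> {{vs ! i, vs ! Suc i} | i. Suc i < length vs}"
      then obtain i where "Suc i < length vs" "e = {vs ! i, vs ! Suc i}" by auto
      then show ?thesis by (intro CollectI exI[of _ i]) auto
    next
      assume "e \<in> {{last vs, hd vs}}"
      then show ?thesis using ne
        by (intro CollectI exI[of _ "length vs - 1"]) (auto simp: last_conv_nth hd_conv_nth)
    qed
  qed
  then show ?thesis by (simp add: cp_idx)
qed

lemma cp_append: "cp (xs @ y # ys) = cp (xs @ [y]) \<union> cp (y # ys)"
  by (induction xs rule: cp.induct) auto

lemma cp_subset: "e \<in> cp xs \<Longrightarrow> e \<subseteq> set xs"
  by (induction xs rule: cp.induct) auto

lemma cp_card: "e \<in> cp xs \<Longrightarrow> distinct xs \<Longrightarrow> card e = 2"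
  by (induction xs rule: cp.induct) auto

definition TE :: "arc set \<Rightarrow> vert set set" where "TE T = {ends \<alpha> | \<alpha>. \<alpha> \<in> T}"
definition Adj :: "arc set \<Rightarrow> vert list \<Rightarrow> vert set set" where "Adj T vs = poly_edges vs \<union> TE T"
definition triS :: "arc set \<Rightarrow> vert list \<Rightarrow> vert set set" where
  "triS T vs = {S. S \<subseteq> set vs \<and> card S = 3 \<and> (\<forall>x\<in>S. \<forall>y\<in>S. x \<noteq> y \<longrightarrow> {x, y} \<in> Adj T vs)}"
definition qv :: "arc set \<Rightarrow> vert list \<Rightarrow> vert \<Rightarrow> int" where
  "qv T vs v = int (card {S \<in> triS T vs. v \<in> S})"
definition nb :: "arc set \<Rightarrow> vert list \<Rightarrow> vert \<Rightarrow> vert set" where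
  "nb T vs v = {w \<in> set vs. w \<noteq> v \<and> {v, w} \<in> Adj T vs}"
definition Good :: "arc set \<Rightarrow> vert list \<Rightarrow> bool" where
  "Good T vs \<longleftrightarrow> prodl (map (qv T vs) vs) = mneg I2 \<and> (\<forall>v\<in>set vs. qv T vs v = int (card (nb T vs v)) - 1)"

lemma triS_eq: "poly_triangles vs (poly_diags T vs) = triS T vs"
  unfolding poly_triangles_def triS_def
proof (rule Collect_cong, rule iffI)
  fix S assume "S \<subseteq> set vs \<and> card S = 3 \<and> (\<forall>x\<in>S. \<forall>y\<in>S. x \<noteq> y \<longrightarrow> {x, y} \<in> poly_edges vs \<union> poly_diags T vs)"
  then show "S \<subseteq> set vs \<and> card S = 3 \<and> (\<forall>x\<in>S. \<forall>y\<in>S. x \<noteq> y \<longrightarrow> {x, y} \<in> Adj T vs)"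
    unfolding Adj_def poly_diags_def TE_def by blast
next
  fix S assume S: "S \<subseteq> set vs \<and> card S = 3 \<and> (\<forall>x\<in>S. \<forall>y\<in>S. x \<noteq> y \<longrightarrow> {x, y} \<in> Adj T vs)"
  have "{x, y} \<in> poly_edges vs \<union> poly_diags T vs" if "x \<in> S" "y \<in> S" "x \<noteq> y" for x y
  proof -
    have xy: "{x,y} \<subseteq> set vs" using S that by auto
    have "{x, y} \<in> Adj T vs" using S that by auto
    then show ?thesis unfolding Adj_def poly_diags_def TE_def using xy by auto
  qed
  then show "S \<subseteq> set vs \<and> card S = 3 \<and> (\<forall>x\<in>S. \<forall>y\<in>S. x \<noteq> y \<longrightarrow> {x, y} \<in> poly_edges vs \<union> poly_diags T vs)"
    using S by blast
qed

lemma qv_out: "v \<notin> set vs \<Longrightarrow> qv T vs v = 0"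
  unfolding qv_def triS_def by auto

lemma finite_triS: "finite (triS T vs)"
proof -
  have "triS T vs \<subseteq> Pow (set vs)" unfolding triS_def by auto
  then show ?thesis by (rule finite_subset) simp
qed



lemma edges_subset: "e \<in> poly_edges vs \<Longrightarrow> e \<subseteq> set vs"
proof -
  assume "e \<in> poly_edges vs"
  then obtain i where i: "i < length vs" "e = {vs ! i, vs ! ((i + 1) mod length vs)}"
    unfolding poly_edges_def by auto
  then have "0 < length vs" by linarith
  then have "(i + 1) mod length vs < length vs" by (rule mod_less_divisor)
  then show ?thesis using i by auto
qed

section \<open>Splitting\<close>

locale split =
  fixes T :: "arc set" and A B C :: "vert list" and x y :: vert
  assumes dist: "distinct (A @ x # B @ y # C)"
    and xyT: "{x, y} \<in> TE T"
    and H: "\<And>u w. u \<in> set B \<Longrightarrow> w \<in> set A \<union> set C \<Longrightarrow> {u, w} \<notin> TE T"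
begin

abbreviation "vs \<equiv> A @ x # B @ y # C"
abbreviation "P1 \<equiv> x # B @ [y]"
abbreviation "P2 \<equiv> A @ x # y # C"

lemma edges_split: "poly_edges vs \<union> {{x, y}} = poly_edges P1 \<union> poly_edges P2"
proof -
  have c1: "cp vs = cp (A @ [x]) \<union> cp P1 \<union> cp (y # C)"
    using cp_append[of A x "B @ y # C"] cp_append[of "x # B" y C] by auto
  have c2: "cp P2 = cp (A @ [x]) \<union> {{x, y}} \<union> cp (y # C)"
    using cp_append[of A x "y # C"] by auto
  have l: "last vs = last P2" "hd vs = hd P2" by (cases C; simp; cases A; simp)+
  show ?thesis
  proof -
    have "poly_edges vs = cp vs \<union> {{last vs, hd vs}}" by (rule poly_edges_cp) simp
    moreover have "poly_edges P1 = cp P1 \<union> {{y, x}}" by (subst poly_edges_cp) auto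
    moreover have "poly_edges P2 = cp P2 \<union> {{last P2, hd P2}}" by (rule poly_edges_cp) simp
    ultimately show ?thesis using c1 c2 l by (auto simp: insert_commute)
  qed
qed

lemma edges_P1: "e \<in> poly_edges P1 \<Longrightarrow> e \<subseteq> set P1"
  by (rule edges_subset)

lemma edges_P2: "e \<in> poly_edges P2 \<Longrightarrow> e \<subseteq> set P2"
  by (rule edges_subset)

lemma inter12: "set P1 \<inter> set P2 = {x, y}"
  using dist by auto

lemma Adj_split: "Adj T vs = Adj T P1 \<union> Adj T P2"
proof -
  have "{x, y} \<in> TE T" by (rule xyT)
  then show ?thesis using edges_split unfolding Adj_def by blast
qed

lemma pair_sub: "{u, w} \<subseteq> X \<inter> Y \<Longrightarrow> X \<inter> Y = {x, y} \<Longrightarrow> u \<noteq> w \<Longrightarrow> {u, w} = {x, y}"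
  by auto

lemma Adj_P1: "u \<in> set P1 \<Longrightarrow> w \<in> set P1 \<Longrightarrow> u \<noteq> w \<Longrightarrow> {u, w} \<in> Adj T vs \<longleftrightarrow> {u, w} \<in> Adj T P1"
proof
  assume u: "u \<in> set P1" "w \<in> set P1" "u \<noteq> w" and a: "{u, w} \<in> Adj T vs"
  have "{u, w} \<in> Adj T P1 \<or> {u, w} \<in> poly_edges P2"
    using a unfolding Adj_split by (auto simp: Adj_def)
  moreover have "{u, w} = {x, y}" if "{u, w} \<in> poly_edges P2"
  proof (rule pair_sub[OF _ inter12 u(3)])
    show "{u, w} \<subseteq> set P1 \<inter> set P2" using edges_P2[OF that] u by auto
  qed
  ultimately show "{u, w} \<in> Adj T P1" using xyT unfolding Adj_def by auto
next
  assume "{u, w} \<in> Adj T P1"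
  then show "{u, w} \<in> Adj T vs" unfolding Adj_split by simp
qed

lemma Adj_P2: "u \<in> set P2 \<Longrightarrow> w \<in> set P2 \<Longrightarrow> u \<noteq> w \<Longrightarrow> {u, w} \<in> Adj T vs \<longleftrightarrow> {u, w} \<in> Adj T P2"
proof
  assume u: "u \<in> set P2" "w \<in> set P2" "u \<noteq> w" and a: "{u, w} \<in> Adj T vs"
  have "{u, w} \<in> Adj T P2 \<or> {u, w} \<in> poly_edges P1"
    using a unfolding Adj_split by (auto simp: Adj_def)
  moreover have "{u, w} = {x, y}" if "{u, w} \<in> poly_edges P1"
  proof (rule pair_sub[OF _ inter12 u(3)])
    show "{u, w} \<subseteq> set P1 \<inter> set P2" using edges_P1[OF that] u by auto
  qed
  ultimately show "{u, w} \<in> Adj T P2" using xyT unfolding Adj_def by auto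
next
  assume "{u, w} \<in> Adj T P2"
  then show "{u, w} \<in> Adj T vs" unfolding Adj_split by simp
qed

lemma Adj_cross: "u \<in> set B \<Longrightarrow> w \<in> set A \<union> set C \<Longrightarrow> {u, w} \<notin> Adj T vs"
proof
  assume u: "u \<in> set B" "w \<in> set A \<union> set C" and a: "{u, w} \<in> Adj T vs"
  have n: "u \<notin> set P2" "w \<notin> set P1" using u dist by auto
  have "{u, w} \<in> poly_edges P1 \<or> {u, w} \<in> poly_edges P2 \<or> {u,w} \<in> TE T"
    using a unfolding Adj_split by (auto simp: Adj_def)
  moreover have "{u, w} \<notin> poly_edges P1" using edges_P1 n by auto
  moreover have "{u, w} \<notin> poly_edges P2" using edges_P2 n by auto
  ultimately show False using H[OF u] by simp
qed

lemma triS_split: "triS T vs = triS T P1 \<union> triS T P2"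
proof (rule set_eqI, rule iffI)
  fix S assume S: "S \<in> triS T vs"
  then have Ss: "S \<subseteq> set P1 \<union> set P2" "card S = 3" and Sa: "\<And>a b. a\<in>S \<Longrightarrow> b\<in>S \<Longrightarrow> a \<noteq> b \<Longrightarrow> {a, b} \<in> Adj T vs"
    unfolding triS_def by auto
  show "S \<in> triS T P1 \<union> triS T P2"
  proof (cases "S \<subseteq> set P1")
    case True
    have "\<forall>a\<in>S. \<forall>b\<in>S. a \<noteq> b \<longrightarrow> {a, b} \<in> Adj T P1"
      using Sa Adj_P1 True by (meson subsetD)
    then have "S \<in> triS T P1" using Ss True unfolding triS_def by simp
    then show ?thesis by simp
  next
    case F1: False
    show ?thesis
    proof (cases "S \<subseteq> set P2")
      case True
      have "\<forall>a\<in>S. \<forall>b\<in>S. a \<noteq> b \<longrightarrow> {a, b} \<in> Adj T P2"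
        using Sa Adj_P2 True by (meson subsetD)
      then have "S \<in> triS T P2" using Ss True unfolding triS_def by simp
      then show ?thesis by simp
    next
      case False
      then obtain u w where uw: "u \<in> S" "u \<notin> set P2" "w \<in> S" "w \<notin> set P1" using F1 by auto
      then have "u \<in> set B" "w \<in> set A \<union> set C" using Ss by auto
      moreover have "u \<noteq> w" using uw Ss by auto
      ultimately have False using Sa[OF uw(1,3)] Adj_cross by blast
      then show ?thesis ..
    qed
  qed
next
  fix S assume "S \<in> triS T P1 \<union> triS T P2"
  then show "S \<in> triS T vs" unfolding triS_def Adj_split by auto
qed

lemma triS_disj: "triS T P1 \<inter> triS T P2 = {}"
proof -
  { fix S assume "S \<in> triS T P1" "S \<in> triS T P2"
    then have "S \<subseteq> {x, y}" "card S = 3" using inter12 unfolding triS_def by auto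
    moreover have "card {x, y} \<le> 2" by (cases "x = y") auto
    ultimately have False using card_mono[of "{x,y}" S] by auto }
  then show ?thesis by auto
qed

lemma qv_split: "qv T vs v = qv T P1 v + qv T P2 v"
proof -
  have "{S \<in> triS T vs. v \<in> S} = {S \<in> triS T P1. v \<in> S} \<union> {S \<in> triS T P2. v \<in> S}"
    using triS_split by auto
  moreover have "finite {S \<in> triS T P1. v \<in> S}" "finite {S \<in> triS T P2. v \<in> S}"
    using finite_triS by auto
  ultimately show ?thesis unfolding qv_def using triS_disj
    by (simp add: card_Un_disjoint disjoint_iff)
qed

lemma nb_B: assumes v: "v \<in> set B" shows "nb T vs v = nb T P1 v"
proof (rule set_eqI)
  fix w
  have vP: "v \<in> set P1" using v by simp
  show "w \<in> nb T vs v \<longleftrightarrow> w \<in> nb T P1 v"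
  proof (cases "w \<in> set P1")
    case True
    then show ?thesis using Adj_P1[OF vP True] unfolding nb_def by auto
  next
    case False
    then have "w \<notin> nb T P1 v" unfolding nb_def by auto
    moreover have "w \<notin> nb T vs v"
    proof
      assume w: "w \<in> nb T vs v"
      then have "w \<in> set A \<union> set C" using False by (auto simp: nb_def)
      then show False using Adj_cross[OF v] w by (auto simp: nb_def)
    qed
    ultimately show ?thesis by simp
  qed
qed

lemma nb_AC: assumes v: "v \<in> set A \<union> set C" shows "nb T vs v = nb T P2 v"
proof (rule set_eqI)
  fix w
  have vP: "v \<in> set P2" using v by auto
  show "w \<in> nb T vs v \<longleftrightarrow> w \<in> nb T P2 v"
  proof (cases "w \<in> set P2")
    case True
    then show ?thesis using Adj_P2[OF vP True] unfolding nb_def by auto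
  next
    case False
    then have "w \<notin> nb T P2 v" unfolding nb_def by auto
    moreover have "w \<notin> nb T vs v"
    proof
      assume w: "w \<in> nb T vs v"
      then have wB: "w \<in> set B" using False by (auto simp: nb_def)
      have "{w, v} \<notin> Adj T vs" using Adj_cross[OF wB v] .
      then show False using w by (auto simp: nb_def insert_commute)
    qed
    ultimately show ?thesis by simp
  qed
qed

lemma nb_xy: assumes v: "v = x \<or> v = y"
  shows "card (nb T vs v) + 1 = card (nb T P1 v) + card (nb T P2 v)"
proof -
  have v12: "v \<in> set P1" "v \<in> set P2" using v by auto
  have xy: "x \<noteq> y" using dist by auto
  obtain z where z: "{v, z} = {x, y}" "z \<noteq> v" using v xy by auto
  have zA: "{v, z} \<in> Adj T P1" "{v, z} \<in> Adj T P2" using xyT z unfolding Adj_def by auto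
  have zs: "z \<in> set P1" "z \<in> set P2" using z v by (auto simp: doubleton_eq_iff)
  have z1: "z \<in> nb T P1 v" "z \<in> nb T P2 v" using zA zs z unfolding nb_def by auto
  have int: "nb T P1 v \<inter> nb T P2 v = {z}"
  proof
    show "nb T P1 v \<inter> nb T P2 v \<subseteq> {z}"
    proof
      fix w assume w: "w \<in> nb T P1 v \<inter> nb T P2 v"
      then have "w \<in> set P1 \<inter> set P2" "w \<noteq> v" unfolding nb_def by auto
      then have "w \<in> {x, y}" "w \<noteq> v" using inter12 by auto
      then show "w \<in> {z}" using z v by (auto simp: doubleton_eq_iff)
    qed
  qed (use z1 in auto)
  have un: "nb T vs v = nb T P1 v \<union> nb T P2 v"
  proof (rule set_eqI)
    fix w
    show "w \<in> nb T vs v \<longleftrightarrow> w \<in> nb T P1 v \<union> nb T P2 v"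
    proof (cases "w \<in> set P1")
      case True
      then have "w \<in> nb T vs v \<longleftrightarrow> w \<in> nb T P1 v"
        using Adj_P1[OF v12(1) True] unfolding nb_def by auto
      moreover have "w \<in> nb T P2 v \<Longrightarrow> w \<in> nb T P1 v" using True int
        using \<open>w \<in> nb T vs v \<longleftrightarrow> w \<in> nb T P1 v\<close> Adj_split unfolding nb_def by auto
      ultimately show ?thesis by blast
    next
      case False
      then have "w \<notin> nb T P1 v" unfolding nb_def by auto
      moreover have "w \<in> nb T vs v \<longleftrightarrow> w \<in> nb T P2 v"
      proof (cases "w \<in> set P2")
        case True
        then show ?thesis using Adj_P2[OF v12(2) True] unfolding nb_def by auto
      next
        case F2: False
        then show ?thesis using False unfolding nb_def by auto
      qed
      ultimately show ?thesis by blast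
    qed
  qed
  have fin: "finite (nb T P1 v)" "finite (nb T P2 v)" unfolding nb_def by auto
  show ?thesis using card_Un_Int[OF fin] un int by simp
qed

lemma Good_split:
  assumes g1: "Good T P1" and g2: "Good T P2"
  shows "Good T vs"
proof -
  have q: "\<And>v. qv T vs v = qv T P1 v + qv T P2 v" by (rule qv_split)
  have cyc: "prodl (map (qv T vs) vs) = prodl (map (qv T P2) P2)"
  proof (rule glue[where g = "qv T P1"])
    show "prodl (map (qv T P1) (x # B @ [y])) = mneg I2" using g1 unfolding Good_def by blast
    show "\<forall>v\<in>set A. qv T vs v = qv T P2 v" using dist by (auto simp: q intro!: qv_out)
    show "\<forall>v\<in>set C. qv T vs v = qv T P2 v" using dist by (auto simp: q intro!: qv_out)
    show "\<forall>v\<in>set B. qv T vs v = qv T P1 v" using dist by (auto simp: q intro!: qv_out)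
  qed (auto simp: q)
  have d1: "\<And>v. v \<in> set P1 \<Longrightarrow> qv T P1 v = int (card (nb T P1 v)) - 1" using g1 unfolding Good_def by blast
  have d2: "\<And>v. v \<in> set P2 \<Longrightarrow> qv T P2 v = int (card (nb T P2 v)) - 1" using g2 unfolding Good_def by blast
  have deg: "qv T vs v = int (card (nb T vs v)) - 1" if v: "v \<in> set vs" for v
  proof -
    consider "v \<in> set B" | "v \<in> set A \<union> set C" | "v = x \<or> v = y" using v by auto
    then show ?thesis
    proof cases
      case 1
      then have "v \<notin> set P2" using dist by auto
      then show ?thesis using nb_B[OF 1] d1[of v] 1 q[of v] qv_out[of v P2] by simp
    next
      case 2
      then have "v \<notin> set P1" using dist by auto
      then show ?thesis using nb_AC[OF 2] d2[of v] 2 q[of v] qv_out[of v P1] by auto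
    next
      case 3
      have "v \<in> set P1" "v \<in> set P2" using 3 by auto
      then show ?thesis using nb_xy[OF 3] d1[of v] d2[of v] q[of v] by linarith
    qed
  qed
  have c2: "prodl (map (qv T P2) P2) = mneg I2" using g2 unfolding Good_def by blast
  show ?thesis unfolding Good_def using cyc c2 deg by simp
qed

end


lemma Good_tri:
  assumes "distinct [a, b, c]"
  shows "Good T [a, b, c]"
proof -
  have E: "{u, w} \<in> Adj T [a, b, c]" if "u \<in> {a,b,c}" "w \<in> {a,b,c}" "u \<noteq> w" for u w
    using that unfolding Adj_def by (auto simp: poly_edges_cp insert_commute)
  have tri: "triS T [a, b, c] = {{a, b, c}}"
  proof -
    have "card {a, b, c} = 3" using assms by auto
    moreover have "S = {a, b, c}" if "S \<subseteq> {a,b,c}" "card S = 3" for S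
      using that by (metis card_seteq finite.emptyI finite.insertI \<open>card {a, b, c} = 3\<close> order_refl)
    ultimately show ?thesis unfolding triS_def using E by auto
  qed
  have q: "qv T [a,b,c] v = 1" if "v \<in> {a,b,c}" for v
  proof -
    have "{S \<in> triS T [a,b,c]. v \<in> S} = {{a,b,c}}" using that unfolding tri by auto
    then show ?thesis unfolding qv_def by simp
  qed
  have n: "card (nb T [a,b,c] v) = 2" if "v \<in> {a,b,c}" for v
  proof -
    have "nb T [a,b,c] v = {a,b,c} - {v}" unfolding nb_def using E that by auto
    then show ?thesis using assms that by auto
  qed
  show ?thesis unfolding Good_def using q n
    by (simp add: MM_def I2_def)
qed




lemma cross_sym: "cross a b = cross b a"
  by (cases a; cases b) (auto simp: mult.commute algebra_simps)

lemma tri_valid: "triangulation T \<Longrightarrow> \<alpha> \<in> T \<Longrightarrow> valid_arc \<alpha>"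
  unfolding triangulation_def by blast
lemma tri_nc: "triangulation T \<Longrightarrow> \<alpha> \<in> T \<Longrightarrow> \<beta> \<in> T \<Longrightarrow> cross \<alpha> \<beta> \<Longrightarrow> False"
  unfolding triangulation_def
  by (metis cross.simps(1) less_irrefl mult_eq_0_iff diff_self cross.simps(2,3) arc.exhaust)
lemma tri_max: "triangulation T \<Longrightarrow> valid_arc \<alpha> \<Longrightarrow> \<alpha> \<notin> T \<Longrightarrow> \<exists>\<beta>\<in>T. cross \<alpha> \<beta>"
  unfolding triangulation_def by blast

lemma TE_iff: "e \<in> TE T \<longleftrightarrow> (\<exists>\<alpha>\<in>T. ends \<alpha> = e)"
  unfolding TE_def by auto

lemma ends_UL: "ends \<alpha> = {Up b, Lo c} \<Longrightarrow> \<alpha> = Conn b c"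
  by (cases \<alpha>) (auto simp: doubleton_eq_iff)
lemma ends_UU: "ends \<alpha> = {Up b, Up c} \<Longrightarrow> \<alpha> = UpA b c \<or> \<alpha> = UpA c b"
  by (cases \<alpha>) (auto simp: doubleton_eq_iff)
lemma ends_LL: "ends \<alpha> = {Lo b, Lo c} \<Longrightarrow> \<alpha> = LoA b c \<or> \<alpha> = LoA c b"
  by (cases \<alpha>) (auto simp: doubleton_eq_iff)




lemma U2:
  assumes T: "triangulation T" and g: "Good T (map Up [c..b])" and cb: "UpA c b \<in> T"
    and ac: "a < c" and cb2: "c + 2 \<le> b"
  shows "Good T (Up a # map Up [c..b])"
proof -
  have e1: "[c..b] = c # [c+1..b]" by (rule upto_rec1) (use cb2 in simp)
  have e2: "[c+1..b] = [c+1..b-1] @ [b]" by (rule upto_rec2) (use cb2 in simp)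
  have l: "map Up [c..b] = Up c # map Up [c+1..b-1] @ [Up b]"
    by (simp only: e1 e2 list.map map_append)
  interpret split T "[Up a]" "map Up [c+1..b-1]" "[]" "Up c" "Up b"
  proof
    show "distinct ([Up a] @ Up c # map Up [c + 1..b - 1] @ Up b # [])"
      using ac cb2 by (auto simp: distinct_map inj_on_def)
    show "{Up c, Up b} \<in> TE T" using cb unfolding TE_iff by force
    fix u w assume u: "u \<in> set (map Up [c + 1..b - 1])" and w: "w \<in> set [Up a] \<union> set []"
    show "{u, w} \<notin> TE T"
    proof
      assume "{u, w} \<in> TE T"
      then obtain \<alpha> where \<alpha>: "\<alpha> \<in> T" "ends \<alpha> = {u, w}" unfolding TE_iff by auto
      obtain e where e: "u = Up e" "c < e" "e < b" using u by auto
      have "\<alpha> = UpA e a \<or> \<alpha> = UpA a e" using ends_UU \<alpha> e w by auto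
      then have "\<alpha> = UpA a e" using tri_valid[OF T \<alpha>(1)] ac e by auto
      then show False using tri_nc[OF T \<alpha>(1) cb] ac e by simp
    qed
  qed
  have g1: "Good T (Up c # map Up [c+1..b-1] @ [Up b])" using g l by simp
  have g2: "Good T [Up a, Up c, Up b]" by (rule Good_tri) (use ac cb2 in auto)
  have "Good T ([Up a] @ Up c # map Up [c+1..b-1] @ Up b # [])"
    by (rule Good_split) (use g1 g2 in auto)
  then show ?thesis using l by simp
qed

lemma U_main:
  assumes T: "triangulation T"
  shows "a + 2 \<le> b \<Longrightarrow> UpA a b \<in> T \<Longrightarrow> Good T (map Up [a..b])"
proof (induction "nat (b - a)" arbitrary: a b rule: less_induct)
  case less
  define CC where "CC = {c. a < c \<and> c < b \<and> (c = a + 1 \<or> UpA a c \<in> T)}"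
  have fin: "finite CC" unfolding CC_def by (rule finite_subset[of _ "{a..b}"]) auto
  have a1: "a + 1 \<in> CC" using less.prems unfolding CC_def by auto
  define c where "c = Max CC"
  have cC: "c \<in> CC" using fin a1 unfolding c_def by (intro Max_in) auto
  have cmax: "\<And>d. d \<in> CC \<Longrightarrow> d \<le> c" using fin unfolding c_def by auto
  have c1: "a < c" "c < b" "c = a + 1 \<or> UpA a c \<in> T" using cC unfolding CC_def by auto
  have cb: "UpA c b \<in> T" if "c + 2 \<le> b"
  proof (rule ccontr)
    assume nT: "UpA c b \<notin> T"
    have "valid_arc (UpA c b)" using that by simp
    then obtain \<beta> where \<beta>: "\<beta> \<in> T" "cross (UpA c b) \<beta>"
      using tri_max[OF T _ nT] by blast
    show False
    proof (cases \<beta>)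
      case (Conn v u)
      then show ?thesis using \<beta> tri_nc[OF T less.prems(2) \<beta>(1)] c1 by auto
    next
      case (UpA e f)
      have ef: "c < e \<and> e < b \<and> b < f \<or> e < c \<and> c < f \<and> f < b" using \<beta> UpA by simp
      show ?thesis
      proof (cases "c < e \<and> e < b \<and> b < f")
        case True
        then show ?thesis using tri_nc[OF T less.prems(2) \<beta>(1)] UpA c1 by auto
      next
        case False
        then have ef2: "e < c" "c < f" "f < b" using ef by auto
        consider "e < a" | "e = a" | "a < e" by linarith
        then show ?thesis
        proof cases
          case 1 then show ?thesis using tri_nc[OF T less.prems(2) \<beta>(1)] UpA c1 ef2 by auto
        next
          case 2
          then have "f \<in> CC" using UpA \<beta> ef2 c1 unfolding CC_def by auto
          then show ?thesis using cmax ef2 by force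
        next
          case 3
          then have acT: "UpA a c \<in> T" using c1 ef2 by auto
          show ?thesis using tri_nc[OF T acT \<beta>(1)] UpA c1 ef2 3 by auto
        qed
      qed
    next
      case (LoA e f)
      then show ?thesis using \<beta> by simp
    qed
  qed
  show ?case
  proof (cases "c = a + 1")
    case True
    show ?thesis
    proof (cases "b = a + 2")
      case True
      have "[a..b] = [a, a+1, a+2]" using True by (simp add: upto_rec1)
      then show ?thesis by (simp add: Good_tri)
    next
      case False
      then have b3: "c + 2 \<le> b" using \<open>c = a + 1\<close> less.prems by auto
      have lt: "nat (b - c) < nat (b - a)" using c1 by auto
      have "Good T (map Up [c..b])"
        using less.hyps[OF lt] cb[OF b3] b3 by blast
      then have "Good T (Up a # map Up [c..b])" using U2[OF T _ cb[OF b3] c1(1) b3] by blast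
      moreover have "[a..b] = a # [c..b]" using \<open>c = a + 1\<close> less.prems by (simp add: upto_rec1)
      ultimately show ?thesis by simp
    qed
  next
    case False
    then have ac: "UpA a c \<in> T" "a + 2 \<le> c" using c1 by auto
    have lt: "nat (c - a) < nat (b - a)" using c1 by auto
    have gac: "Good T (map Up [a..c])" using less.hyps[OF lt] ac by blast
    have gcb: "Good T (Up a # map Up [c..b])"
    proof (cases "c + 2 \<le> b")
      case True
      have lt: "nat (b - c) < nat (b - a)" using c1 by auto
      have "Good T (map Up [c..b])" using less.hyps[OF lt] cb[OF True] True by blast
      then show ?thesis using U2[OF T _ cb[OF True] c1(1) True] by blast
    next
      case False
      then have "[c..b] = [c, b]" using c1 by (simp add: upto_rec1)
      then show ?thesis using c1 by (simp add: Good_tri)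
    qed
    have e1: "[a..c] = a # [a+1..c]" by (rule upto_rec1) (use ac in simp)
    have e2: "[a+1..c] = [a+1..c-1] @ [c]" by (rule upto_rec2) (use ac in simp)
    have l1: "map Up [a..c] = Up a # map Up [a+1..c-1] @ [Up c]"
      by (simp only: e1 e2 list.map map_append)
    have l2: "[c..b] = c # [c+1..b]" using c1 by (simp add: upto_rec1)
    interpret split T "[]" "map Up [a+1..c-1]" "map Up [c+1..b]" "Up a" "Up c"
    proof
      show "distinct ([] @ Up a # map Up [a+1..c-1] @ Up c # map Up [c+1..b])"
        using c1 ac by (auto simp: distinct_map inj_on_def)
      show "{Up a, Up c} \<in> TE T" using ac unfolding TE_iff by force
      fix u w assume u: "u \<in> set (map Up [a+1..c-1])" and w: "w \<in> set [] \<union> set (map Up [c+1..b])"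
      show "{u, w} \<notin> TE T"
      proof
        assume "{u, w} \<in> TE T"
        then obtain \<alpha> where \<alpha>: "\<alpha> \<in> T" "ends \<alpha> = {u, w}" unfolding TE_iff by auto
        obtain e where e: "u = Up e" "a < e" "e < c" using u by auto
        obtain f where f: "w = Up f" "c < f" "f \<le> b" using w by auto
        have "\<alpha> = UpA e f \<or> \<alpha> = UpA f e" using ends_UU \<alpha> e f by auto
        then have "\<alpha> = UpA e f" using tri_valid[OF T \<alpha>(1)] e f by auto
        then show False using tri_nc[OF T \<alpha>(1) ac(1)] e f by simp
      qed
    qed
    have "Good T ([] @ Up a # map Up [a+1..c-1] @ Up c # map Up [c+1..b])"
      by (rule Good_split) (use gac gcb l1 l2 in auto)
    moreover have s1: "[a..b] = a # [a+1..b]" by (rule upto_rec1) (use c1 in simp)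
    moreover have s2: "[a+1..b] = [a+1..c-1] @ c # [c+1..b]" by (rule upto_split3) (use c1 in simp_all)
    ultimately show ?thesis by (simp only: s1 s2 list.map map_append append.simps)
  qed
qed

lemma L2:
  assumes T: "triangulation T" and g: "Good T (map Lo [c..b])" and cb: "LoA c b \<in> T"
    and ac: "a < c" and cb2: "c + 2 \<le> b"
  shows "Good T (Lo a # map Lo [c..b])"
proof -
  have e1: "[c..b] = c # [c+1..b]" by (rule upto_rec1) (use cb2 in simp)
  have e2: "[c+1..b] = [c+1..b-1] @ [b]" by (rule upto_rec2) (use cb2 in simp)
  have l: "map Lo [c..b] = Lo c # map Lo [c+1..b-1] @ [Lo b]"
    by (simp only: e1 e2 list.map map_append)
  interpret split T "[Lo a]" "map Lo [c+1..b-1]" "[]" "Lo c" "Lo b"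
  proof
    show "distinct ([Lo a] @ Lo c # map Lo [c + 1..b - 1] @ Lo b # [])"
      using ac cb2 by (auto simp: distinct_map inj_on_def)
    show "{Lo c, Lo b} \<in> TE T" using cb unfolding TE_iff by force
    fix u w assume u: "u \<in> set (map Lo [c + 1..b - 1])" and w: "w \<in> set [Lo a] \<union> set []"
    show "{u, w} \<notin> TE T"
    proof
      assume "{u, w} \<in> TE T"
      then obtain \<alpha> where \<alpha>: "\<alpha> \<in> T" "ends \<alpha> = {u, w}" unfolding TE_iff by auto
      obtain e where e: "u = Lo e" "c < e" "e < b" using u by auto
      have "\<alpha> = LoA e a \<or> \<alpha> = LoA a e" using ends_LL \<alpha> e w by auto
      then have "\<alpha> = LoA a e" using tri_valid[OF T \<alpha>(1)] ac e by auto
      then show False using tri_nc[OF T \<alpha>(1) cb] ac e by simp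
    qed
  qed
  have g1: "Good T (Lo c # map Lo [c+1..b-1] @ [Lo b])" using g l by simp
  have g2: "Good T [Lo a, Lo c, Lo b]" by (rule Good_tri) (use ac cb2 in auto)
  have "Good T ([Lo a] @ Lo c # map Lo [c+1..b-1] @ Lo b # [])"
    by (rule Good_split) (use g1 g2 in auto)
  then show ?thesis using l by simp
qed

lemma L_main:
  assumes T: "triangulation T"
  shows "a + 2 \<le> b \<Longrightarrow> LoA a b \<in> T \<Longrightarrow> Good T (map Lo [a..b])"
proof (induction "nat (b - a)" arbitrary: a b rule: less_induct)
  case less
  define CC where "CC = {c. a < c \<and> c < b \<and> (c = a + 1 \<or> LoA a c \<in> T)}"
  have fin: "finite CC" unfolding CC_def by (rule finite_subset[of _ "{a..b}"]) auto
  have a1: "a + 1 \<in> CC" using less.prems unfolding CC_def by auto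
  define c where "c = Max CC"
  have cC: "c \<in> CC" using fin a1 unfolding c_def by (intro Max_in) auto
  have cmax: "\<And>d. d \<in> CC \<Longrightarrow> d \<le> c" using fin unfolding c_def by auto
  have c1: "a < c" "c < b" "c = a + 1 \<or> LoA a c \<in> T" using cC unfolding CC_def by auto
  have cb: "LoA c b \<in> T" if "c + 2 \<le> b"
  proof (rule ccontr)
    assume nT: "LoA c b \<notin> T"
    have "valid_arc (LoA c b)" using that by simp
    then obtain \<beta> where \<beta>: "\<beta> \<in> T" "cross (LoA c b) \<beta>"
      using tri_max[OF T _ nT] by blast
    show False
    proof (cases \<beta>)
      case (Conn v u)
      then show ?thesis using \<beta> tri_nc[OF T less.prems(2) \<beta>(1)] c1 by auto
    next
      case (LoA e f)
      have ef: "c < e \<and> e < b \<and> b < f \<or> e < c \<and> c < f \<and> f < b" using \<beta> LoA by simp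
      show ?thesis
      proof (cases "c < e \<and> e < b \<and> b < f")
        case True
        then show ?thesis using tri_nc[OF T less.prems(2) \<beta>(1)] LoA c1 by auto
      next
        case False
        then have ef2: "e < c" "c < f" "f < b" using ef by auto
        consider "e < a" | "e = a" | "a < e" by linarith
        then show ?thesis
        proof cases
          case 1 then show ?thesis using tri_nc[OF T less.prems(2) \<beta>(1)] LoA c1 ef2 by auto
        next
          case 2
          then have "f \<in> CC" using LoA \<beta> ef2 c1 unfolding CC_def by auto
          then show ?thesis using cmax ef2 by force
        next
          case 3
          then have acT: "LoA a c \<in> T" using c1 ef2 by auto
          show ?thesis using tri_nc[OF T acT \<beta>(1)] LoA c1 ef2 3 by auto
        qed
      qed
    next
      case (UpA e f)
      then show ?thesis using \<beta> by simp
    qed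
  qed
  show ?case
  proof (cases "c = a + 1")
    case True
    show ?thesis
    proof (cases "b = a + 2")
      case True
      have "[a..b] = [a, a+1, a+2]" using True by (simp add: upto_rec1)
      then show ?thesis by (simp add: Good_tri)
    next
      case False
      then have b3: "c + 2 \<le> b" using \<open>c = a + 1\<close> less.prems by auto
      have lt: "nat (b - c) < nat (b - a)" using c1 by auto
      have "Good T (map Lo [c..b])"
        using less.hyps[OF lt] cb[OF b3] b3 by blast
      then have "Good T (Lo a # map Lo [c..b])" using L2[OF T _ cb[OF b3] c1(1) b3] by blast
      moreover have "[a..b] = a # [c..b]" using \<open>c = a + 1\<close> less.prems by (simp add: upto_rec1)
      ultimately show ?thesis by simp
    qed
  next
    case False
    then have ac: "LoA a c \<in> T" "a + 2 \<le> c" using c1 by auto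
    have lt: "nat (c - a) < nat (b - a)" using c1 by auto
    have gac: "Good T (map Lo [a..c])" using less.hyps[OF lt] ac by blast
    have gcb: "Good T (Lo a # map Lo [c..b])"
    proof (cases "c + 2 \<le> b")
      case True
      have lt: "nat (b - c) < nat (b - a)" using c1 by auto
      have "Good T (map Lo [c..b])" using less.hyps[OF lt] cb[OF True] True by blast
      then show ?thesis using L2[OF T _ cb[OF True] c1(1) True] by blast
    next
      case False
      then have "[c..b] = [c, b]" using c1 by (simp add: upto_rec1)
      then show ?thesis using c1 by (simp add: Good_tri)
    qed
    have e1: "[a..c] = a # [a+1..c]" by (rule upto_rec1) (use ac in simp)
    have e2: "[a+1..c] = [a+1..c-1] @ [c]" by (rule upto_rec2) (use ac in simp)
    have l1: "map Lo [a..c] = Lo a # map Lo [a+1..c-1] @ [Lo c]"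
      by (simp only: e1 e2 list.map map_append)
    have l2: "[c..b] = c # [c+1..b]" using c1 by (simp add: upto_rec1)
    interpret split T "[]" "map Lo [a+1..c-1]" "map Lo [c+1..b]" "Lo a" "Lo c"
    proof
      show "distinct ([] @ Lo a # map Lo [a+1..c-1] @ Lo c # map Lo [c+1..b])"
        using c1 ac by (auto simp: distinct_map inj_on_def)
      show "{Lo a, Lo c} \<in> TE T" using ac unfolding TE_iff by force
      fix u w assume u: "u \<in> set (map Lo [a+1..c-1])" and w: "w \<in> set [] \<union> set (map Lo [c+1..b])"
      show "{u, w} \<notin> TE T"
      proof
        assume "{u, w} \<in> TE T"
        then obtain \<alpha> where \<alpha>: "\<alpha> \<in> T" "ends \<alpha> = {u, w}" unfolding TE_iff by auto
        obtain e where e: "u = Lo e" "a < e" "e < c" using u by auto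
        obtain f where f: "w = Lo f" "c < f" "f \<le> b" using w by auto
        have "\<alpha> = LoA e f \<or> \<alpha> = LoA f e" using ends_LL \<alpha> e f by auto
        then have "\<alpha> = LoA e f" using tri_valid[OF T \<alpha>(1)] e f by auto
        then show False using tri_nc[OF T \<alpha>(1) ac(1)] e f by simp
      qed
    qed
    have "Good T ([] @ Lo a # map Lo [a+1..c-1] @ Lo c # map Lo [c+1..b])"
      by (rule Good_split) (use gac gcb l1 l2 in auto)
    moreover have s1: "[a..b] = a # [a+1..b]" by (rule upto_rec1) (use c1 in simp)
    moreover have s2: "[a+1..b] = [a+1..c-1] @ c # [c+1..b]" by (rule upto_split3) (use c1 in simp_all)
    ultimately show ?thesis by (simp only: s1 s2 list.map map_append append.simps)
  qed
qed




lemma map_upto_snoc: "i \<le> j \<Longrightarrow> map f [i..j] = map f [i..j-1] @ [f j]"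
  by (simp add: upto_rec2)
lemma map_upto_cons: "i \<le> j \<Longrightarrow> map f [i..j] = f i # map f [i+1..j]"
  by (simp add: upto_rec1)

lemma sp_decomp:
  assumes "p \<le> v" "v \<le> r" "s \<le> u" "u \<le> q"
  shows "strip_poly p r s q = map Up [p..v-1] @ Up v # (map Up [v+1..r] @ map Lo [s..u-1]) @ Lo u # map Lo [u+1..q]"
    and "strip_poly v r s u = Up v # (map Up [v+1..r] @ map Lo [s..u-1]) @ [Lo u]"
    and "strip_poly p v u q = map Up [p..v-1] @ Up v # Lo u # map Lo [u+1..q]"
proof -
  have a: "[p..r] = [p..v-1] @ v # [v+1..r]" using assms by (simp add: upto_split3)
  have b: "[s..q] = [s..u-1] @ u # [u+1..q]" using assms by (simp add: upto_split3)
  have c: "[v..r] = v # [v+1..r]" using assms by (simp add: upto_rec1)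
  have d: "[s..u] = [s..u-1] @ [u]" using assms by (simp add: upto_rec2)
  have e: "[p..v] = [p..v-1] @ [v]" using assms by (simp add: upto_rec2)
  have f: "[u..q] = u # [u+1..q]" using assms by (simp add: upto_rec1)
  show "strip_poly p r s q = map Up [p..v-1] @ Up v # (map Up [v+1..r] @ map Lo [s..u-1]) @ Lo u # map Lo [u+1..q]"
    unfolding strip_poly_def by (simp only: a b list.map map_append append.simps append_assoc)
  show "strip_poly v r s u = Up v # (map Up [v+1..r] @ map Lo [s..u-1]) @ [Lo u]"
    unfolding strip_poly_def by (simp only: c d list.map map_append append.simps append_assoc)
  show "strip_poly p v u q = map Up [p..v-1] @ Up v # Lo u # map Lo [u+1..q]"
    unfolding strip_poly_def by (simp only: e f list.map map_append append.simps append_assoc)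
qed

lemma S1_loc:
  assumes T: "triangulation T" and vu: "Conn v u \<in> T"
    and le: "p \<le> v" "v \<le> r" "s \<le> u" "u \<le> q"
  shows "split T (map Up [p..v-1]) (map Up [v+1..r] @ map Lo [s..u-1]) (map Lo [u+1..q]) (Up v) (Lo u)"
proof
  show "distinct (map Up [p..v-1] @ Up v # (map Up [v+1..r] @ map Lo [s..u-1]) @ Lo u # map Lo [u+1..q])"
    by (auto simp: distinct_map inj_on_def)
  show "{Up v, Lo u} \<in> TE T" using vu unfolding TE_iff by force
  fix x w assume x: "x \<in> set (map Up [v+1..r] @ map Lo [s..u-1])"
    and w: "w \<in> set (map Up [p..v-1]) \<union> set (map Lo [u+1..q])"
  show "{x, w} \<notin> TE T"
  proof
    assume "{x, w} \<in> TE T"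
    then obtain \<alpha> where \<alpha>: "\<alpha> \<in> T" "ends \<alpha> = {x, w}" unfolding TE_iff by auto
    have va: "valid_arc \<alpha>" using tri_valid[OF T \<alpha>(1)] .
    have "cross \<alpha> (Conn v u)"
    proof -
      consider (a) b where "x = Up b" "v < b" | (b) c where "x = Lo c" "c < u" using x by auto
      then show ?thesis
      proof cases
        case (a b)
        consider (c) b' where "w = Up b'" "b' < v" | (d) c' where "w = Lo c'" "u < c'" using w by auto
        then show ?thesis
        proof cases
          case (c b')
          then have "\<alpha> = UpA b b' \<or> \<alpha> = UpA b' b" using ends_UU \<alpha> a by auto
          then show ?thesis using va a c by auto
        next
          case (d c')
          then have "\<alpha> = Conn b c'" using ends_UL \<alpha> a by auto
          then show ?thesis using a d by simp
        qed
      next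
        case (b c)
        consider (c) b' where "w = Up b'" "b' < v" | (d) c' where "w = Lo c'" "u < c'" using w by auto
        then show ?thesis
        proof cases
          case (c b')
          then have "\<alpha> = Conn b' c" using ends_UL \<alpha> b by (auto simp: insert_commute)
          then show ?thesis using b c by (simp add: mult_neg_neg)
        next
          case (d c')
          then have "\<alpha> = LoA c c' \<or> \<alpha> = LoA c' c" using ends_LL \<alpha> b by auto
          then show ?thesis using va b d by auto
        qed
      qed
    qed
    then show False using tri_nc[OF T \<alpha>(1) vu] by simp
  qed
qed

lemma S1_Good:
  assumes T: "triangulation T" and vu: "Conn v u \<in> T"
    and le: "p \<le> v" "v \<le> r" "s \<le> u" "u \<le> q"
    and g1: "Good T (strip_poly v r s u)" and g2: "Good T (strip_poly p v u q)"
  shows "Good T (strip_poly p r s q)"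
proof -
  interpret split T "map Up [p..v-1]" "map Up [v+1..r] @ map Lo [s..u-1]" "map Lo [u+1..q]" "Up v" "Lo u"
    by (rule S1_loc[OF T vu le])
  show ?thesis using Good_split g1 g2 unfolding sp_decomp[OF le] by blast
qed

lemma S1_qv:
  assumes T: "triangulation T" and vu: "Conn v u \<in> T"
    and le: "p \<le> v" "v \<le> r" "s \<le> u" "u \<le> q"
  shows "qv T (strip_poly p r s q) x = qv T (strip_poly v r s u) x + qv T (strip_poly p v u q) x"
proof -
  interpret split T "map Up [p..v-1]" "map Up [v+1..r] @ map Lo [s..u-1]" "map Lo [u+1..q]" "Up v" "Lo u"
    by (rule S1_loc[OF T vu le])
  show ?thesis unfolding sp_decomp[OF le] by (rule qv_split)
qed




lemma S_main:
  assumes T: "triangulation T"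
  shows "p \<le> r \<Longrightarrow> s \<le> q \<Longrightarrow> (p, q) \<noteq> (r, s) \<Longrightarrow> Conn p q \<in> T \<Longrightarrow> Conn r s \<in> T
         \<Longrightarrow> Good T (strip_poly p r s q)"
proof (induction "nat ((r - p) + (q - s))" arbitrary: p r s q rule: less_induct)
  case less
  note pq = less.prems(4) and rs = less.prems(5)
  show ?case
  proof (cases "\<exists>v u. Conn v u \<in> T \<and> p \<le> v \<and> v \<le> r \<and> s \<le> u \<and> u \<le> q \<and> (v, u) \<noteq> (p, q) \<and> (v, u) \<noteq> (r, s)")
    case True
    then obtain v u where vu: "Conn v u \<in> T" "p \<le> v" "v \<le> r" "s \<le> u" "u \<le> q" "(v, u) \<noteq> (p, q)" "(v, u) \<noteq> (r, s)"
      by blast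
    have lt1: "nat ((r - v) + (u - s)) < nat ((r - p) + (q - s))" using vu by auto
    have lt2: "nat ((v - p) + (q - u)) < nat ((r - p) + (q - s))" using vu by auto
    have g1: "Good T (strip_poly v r s u)" using less.hyps[OF lt1] vu rs by auto
    have g2: "Good T (strip_poly p v u q)" using less.hyps[OF lt2] vu pq by auto
    show ?thesis by (rule S1_Good[OF T vu(1-5) g1 g2])
  next
    case False
    note noD = False
    have nodiag: "\<And>v u. Conn v u \<in> T \<Longrightarrow> p \<le> v \<Longrightarrow> v \<le> r \<Longrightarrow> s \<le> u \<Longrightarrow> u \<le> q \<Longrightarrow> (v, u) = (p, q) \<or> (v, u) = (r, s)"
      using False by blast
    have ncr: "\<And>\<beta>. \<beta> \<in> T \<Longrightarrow> \<not> cross (Conn p q) \<beta> \<and> \<not> cross (Conn r s) \<beta>"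
      using tri_nc[OF T pq] tri_nc[OF T rs] by blast
    have sq: "s = q \<or> p = r"
    proof (rule ccontr)
      assume "\<not> (s = q \<or> p = r)"
      then have pr: "p < r" "s < q" using less.prems by auto
      have "Conn r q \<in> T"
      proof (rule ccontr)
        assume nT: "Conn r q \<notin> T"
        obtain \<beta> where \<beta>: "\<beta> \<in> T" "cross (Conn r q) \<beta>" using tri_max[OF T _ nT] by auto
        show False
        proof (cases \<beta>)
          case (Conn v u)
          have c1: "(r - v) * (q - u) > 0" using \<beta> Conn by simp
          have c2: "\<not> (p - v) * (q - u) > 0" "\<not> (r - v) * (s - u) > 0" using ncr[OF \<beta>(1)] Conn by auto
          have "v < r \<and> u < q \<or> v > r \<and> u > q" using c1 by (auto simp: zero_less_mult_iff)
          then show False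
          proof
            assume h: "v < r \<and> u < q"
            then have "p \<le> v" "s \<le> u" using c2 by (auto simp: zero_less_mult_iff not_less)
            then show False using nodiag[of v u] \<beta>(1) Conn h by auto
          next
            assume h: "v > r \<and> u > q"
            then show False using c2(2) pr by (auto simp: zero_less_mult_iff)
          qed
        next
          case (UpA e f)
          then show False using \<beta> ncr[OF \<beta>(1)] by auto
        next
          case (LoA e f)
          then show False using \<beta> ncr[OF \<beta>(1)] by auto
        qed
      qed
      then show False using nodiag[of r q] pr by auto
    qed
    show ?thesis
    proof (cases "s = q")
      case True
      then have pr: "p < r" using less.prems by auto
      show ?thesis
      proof (cases "r = p + 1")
        case True
        have "strip_poly p r s q = [Up p, Up (p+1), Lo s]"
          using True \<open>s = q\<close> unfolding strip_poly_def by (simp add: upto_rec1)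
        then show ?thesis by (simp add: Good_tri)
      next
        case False
        then have r2: "p + 2 \<le> r" using pr by auto
        have pr_T: "UpA p r \<in> T"
        proof (rule ccontr)
          assume nT: "UpA p r \<notin> T"
          have "valid_arc (UpA p r)" using r2 by simp
          then obtain \<beta> where \<beta>: "\<beta> \<in> T" "cross (UpA p r) \<beta>" using tri_max[OF T _ nT] by blast
          show False
          proof (cases \<beta>)
            case (Conn v u)
            have h: "p < v" "v < r" using \<beta> Conn by auto
            have c2: "\<not> (p - v) * (q - u) > 0" "\<not> (r - v) * (s - u) > 0" using ncr[OF \<beta>(1)] Conn by auto
            have "u = s" using c2 h \<open>s = q\<close>
              by (auto simp: zero_less_mult_iff not_less)
            then show False using nodiag[of v u] \<beta>(1) Conn h \<open>s = q\<close> by auto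
          next
            case (UpA e f)
            then show False using \<beta> ncr[OF \<beta>(1)] by auto
          next
            case (LoA e f)
            then show False using \<beta> by auto
          qed
        qed
        have gU: "Good T (map Up [p..r])" by (rule U_main[OF T r2 pr_T])
        interpret split T "[]" "map Up [p+1..r-1]" "[Lo s]" "Up p" "Up r"
        proof
          show "distinct ([] @ Up p # map Up [p+1..r-1] @ Up r # [Lo s])" using r2
            by (auto simp: distinct_map inj_on_def)
          show "{Up p, Up r} \<in> TE T" using pr_T unfolding TE_iff by force
          fix x w assume x: "x \<in> set (map Up [p+1..r-1])" and w: "w \<in> set [] \<union> set [Lo s]"
          show "{x, w} \<notin> TE T"
          proof
            assume "{x, w} \<in> TE T"
            then obtain \<alpha> where \<alpha>: "\<alpha> \<in> T" "ends \<alpha> = {x, w}" unfolding TE_iff by auto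
            obtain e where e: "x = Up e" "p < e" "e < r" using x by auto
            have "\<alpha> = Conn e s" using ends_UL \<alpha> e w by auto
            then show False using nodiag[of e s] \<alpha> e \<open>s = q\<close> by auto
          qed
        qed
        have "Good T ([] @ Up p # map Up [p+1..r-1] @ Up r # [Lo s])"
        proof (rule Good_split)
          show "Good T (Up p # map Up [p+1..r-1] @ [Up r])"
            using gU r2 by (simp add: map_upto_cons[of p r] map_upto_snoc[of "p+1" r])
          show "Good T ([] @ Up p # Up r # [Lo s])" using r2 by (auto intro: Good_tri)
        qed
        moreover have "strip_poly p r s q = [] @ Up p # map Up [p+1..r-1] @ Up r # [Lo s]"
          unfolding strip_poly_def using r2 \<open>s = q\<close>
          by (simp add: map_upto_cons[of p r] map_upto_snoc[of "p+1" r])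
        ultimately show ?thesis by simp
      qed
    next
      case False
      then have pr: "p = r" "s < q" using less.prems sq by auto
      show ?thesis
      proof (cases "q = s + 1")
        case True
        have "strip_poly p r s q = [Up p, Lo s, Lo (s+1)]"
          using True pr unfolding strip_poly_def by (simp add: upto_rec1)
        then show ?thesis by (simp add: Good_tri)
      next
        case False
        then have r2: "s + 2 \<le> q" using pr by auto
        have pr_T: "LoA s q \<in> T"
        proof (rule ccontr)
          assume nT: "LoA s q \<notin> T"
          have "valid_arc (LoA s q)" using r2 by simp
          then obtain \<beta> where \<beta>: "\<beta> \<in> T" "cross (LoA s q) \<beta>" using tri_max[OF T _ nT] by blast
          show False
          proof (cases \<beta>)
            case (Conn v u)
            have h: "s < u" "u < q" using \<beta> Conn by auto
            have c2: "\<not> (p - v) * (q - u) > 0" "\<not> (r - v) * (s - u) > 0" using ncr[OF \<beta>(1)] Conn by auto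
            have "v = p" using c2 h pr
              by (auto simp: zero_less_mult_iff not_less)
            then show False using nodiag[of v u] \<beta>(1) Conn h pr by auto
          next
            case (LoA e f)
            then show False using \<beta> ncr[OF \<beta>(1)] by auto
          next
            case (UpA e f)
            then show False using \<beta> by auto
          qed
        qed
        have gL: "Good T (map Lo [s..q])" by (rule L_main[OF T r2 pr_T])
        interpret split T "[Up p]" "map Lo [s+1..q-1]" "[]" "Lo s" "Lo q"
        proof
          show "distinct ([Up p] @ Lo s # map Lo [s+1..q-1] @ Lo q # [])" using r2
            by (auto simp: distinct_map inj_on_def)
          show "{Lo s, Lo q} \<in> TE T" using pr_T unfolding TE_iff by force
          fix x w assume x: "x \<in> set (map Lo [s+1..q-1])" and w: "w \<in> set [Up p] \<union> set []"
          show "{x, w} \<notin> TE T"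
          proof
            assume "{x, w} \<in> TE T"
            then obtain \<alpha> where \<alpha>: "\<alpha> \<in> T" "ends \<alpha> = {x, w}" unfolding TE_iff by auto
            obtain e where e: "x = Lo e" "s < e" "e < q" using x by auto
            have "\<alpha> = Conn p e" using ends_UL \<alpha> e w by (auto simp: insert_commute)
            then show False using nodiag[of p e] \<alpha> e pr by auto
          qed
        qed
        have "Good T ([Up p] @ Lo s # map Lo [s+1..q-1] @ Lo q # [])"
        proof (rule Good_split)
          show "Good T (Lo s # map Lo [s+1..q-1] @ [Lo q])"
            using gL r2 by (simp add: map_upto_cons[of s q] map_upto_snoc[of "s+1" q])
          show "Good T ([Up p] @ Lo s # Lo q # [])" using r2 by (auto intro: Good_tri)
        qed
        moreover have "strip_poly p r s q = [Up p] @ Lo s # map Lo [s+1..q-1] @ Lo q # []"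
          unfolding strip_poly_def using r2 pr
          by (simp add: map_upto_cons[of s q] map_upto_snoc[of "s+1" q])
        ultimately show ?thesis by simp
      qed
    qed
  qed
qed




lemma prodl_snoc: "prodl (xs @ [z]) = mmul (MM z) (prodl xs)"
  by (simp add: prodl_append)

lemma mseq_prod:
  "k + d < N \<Longrightarrow> mseq a N k (Suc d) = e11 (prodl (map a [k+1..<k+1+d])) \<and>
                  mseq a N k d = e21 (prodl (map a [k+1..<k+1+d]))"
proof (induction d)
  case 0
  then show ?case by (simp add: I2_def)
next
  case (Suc d)
  then have ih: "mseq a N k (Suc d) = e11 (prodl (map a [k+1..<k+1+d]))"
       "mseq a N k d = e21 (prodl (map a [k+1..<k+1+d]))" by auto
  have md: "(k + d + 1) mod N = k + 1 + d" using Suc.prems by simp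
  have u: "[k+1..<k+1+Suc d] = [k+1..<k+1+d] @ [k+1+d]" by simp
  obtain e f g h where P: "prodl (map a [k+1..<k+1+d]) = Mat e f g h" by (cases "prodl (map a [k+1..<k+1+d])")
  have Q: "prodl (map a [k+1..<k+1+Suc d]) = mmul (MM (a (k+1+d))) (Mat e f g h)"
    by (simp only: u map_append list.map prodl_snoc P)
  have m3: "mseq a N k (Suc (Suc d)) = a ((k + d + 1) mod N) * mseq a N k (Suc d) - mseq a N k d"
    by (simp only: mseq.simps)
  show ?case unfolding Q m3 md ih P by (simp add: MM_def)
qed

lemma vidx_nth: "distinct vs \<Longrightarrow> n < length vs \<Longrightarrow> vidx vs (vs ! n) = n"
  unfolding vidx_def by (rule the_equality) (auto simp: nth_eq_iff_index_eq)

lemma tri_at_qv: "n < length vs \<Longrightarrow> tri_at vs (poly_diags T vs) n = qv T vs (vs ! n)"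
  unfolding tri_at_def qv_def triS_eq by simp

lemma friese_seg:
  assumes d: "distinct (X @ Z @ Y)" and X: "X \<noteq> []" and Y: "Y \<noteq> []"
  shows "friese (X @ Z @ Y) (poly_diags T (X @ Z @ Y)) (last X) (hd Y) = e11 (prodl (map (qv T (X @ Z @ Y)) Z))"
proof -
  define vs where "vs = X @ Z @ Y"
  define k where "k = length X - 1"
  define l where "l = length X + length Z"
  define N where "N = length vs"
  have lx: "length X > 0" using X by simp
  have ly: "length Y > 0" using Y by simp
  have kl: "k < l" "l < N" unfolding k_def l_def N_def vs_def using lx ly by (linarith, simp)
  have lastX: "last X = vs ! k" unfolding vs_def k_def using X by (simp add: last_conv_nth nth_append)
  have hdY: "hd Y = vs ! l" unfolding vs_def l_def using Y by (simp add: hd_conv_nth nth_append)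
  have vk: "vidx vs (last X) = k" "vidx vs (hd Y) = l"
    using vidx_nth[of vs k] vidx_nth[of vs l] d kl lastX hdY unfolding vs_def N_def by auto
  have md: "(l + N - k) mod N = Suc (length Z)"
  proof -
    have "l + N - k = N + Suc (length Z)" unfolding l_def k_def using lx kl by linarith
    moreover have "Suc (length Z) < N" using lx ly unfolding N_def vs_def length_append by linarith
    ultimately show ?thesis by (metis add.commute mod_add_self2 mod_less)
  qed
  have ms: "mseq (tri_at vs (poly_diags T vs)) N k (Suc (length Z))
      = e11 (prodl (map (tri_at vs (poly_diags T vs)) [k+1..<k+1+length Z]))"
  proof -
    have "k + length Z < N" using kl lx unfolding l_def k_def by linarith
    then show ?thesis using mseq_prod by blast
  qed
  have mp: "map (tri_at vs (poly_diags T vs)) [k+1..<k+1+length Z] = map (qv T vs) Z"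
  proof (rule nth_equalityI)
    fix n assume "n < length (map (tri_at vs (poly_diags T vs)) [k+1..<k+1+length Z])"
    then have n: "n < length Z" by (simp del: upt_Suc)
    have "k + 1 + n < length vs" using n kl lx unfolding l_def N_def k_def by linarith
    moreover have "vs ! (k + 1 + n) = Z ! n" unfolding vs_def k_def using lx n
      by (simp add: nth_append)
    ultimately show "map (tri_at vs (poly_diags T vs)) [k+1..<k+1+length Z] ! n = map (qv T vs) Z ! n"
      using n by (simp add: tri_at_qv del: upt_Suc)
  qed (simp del: upt_Suc)
  show ?thesis unfolding friese_def Let_def vs_def[symmetric] N_def[symmetric] vk md ms mp ..
qed

definition Fv :: "arc set \<Rightarrow> int \<Rightarrow> int \<Rightarrow> int \<Rightarrow> int \<Rightarrow> int \<Rightarrow> int \<Rightarrow> int" where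
  "Fv T p r s q i a = e11 (prodl (map (qv T (strip_poly p r s q)) (map Up [i+1..r] @ map Lo [s..a-1])))"

lemma friese_F:
  assumes "p < i" "i < r" "s < a" "a < q"
  shows "friese (strip_poly p r s q) (poly_diags T (strip_poly p r s q)) (Up i) (Lo a) = Fv T p r s q i a"
proof -
  have e1: "[p..r] = [p..i] @ [i+1..r]" using assms by (simp add: upto_split2)
  have e2: "[s..q] = [s..a-1] @ [a..q]" using assms by (simp add: upto_split1)
  have sp: "strip_poly p r s q = map Up [p..i] @ (map Up [i+1..r] @ map Lo [s..a-1]) @ map Lo [a..q]"
    unfolding strip_poly_def e1 e2 by simp
  have d: "distinct (strip_poly p r s q)" unfolding strip_poly_def by (auto simp: distinct_map inj_on_def)
  have lx: "last (map Up [p..i]) = Up i" using assms by (simp add: upto_rec2 last_map)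
  have hy: "hd (map Lo [a..q]) = Lo a" using assms by (simp add: upto_rec1)
  show ?thesis
    using friese_seg[of "map Up [p..i]" "map Up [i+1..r] @ map Lo [s..a-1]" "map Lo [a..q]" T] d assms
    unfolding sp[symmetric] lx hy Fv_def by auto
qed




lemma F_ext_r:
  assumes T: "triangulation T" and pq: "Conn p q \<in> T" and rs: "Conn r s \<in> T" and rs': "Conn r' s' \<in> T"
    and le: "r \<le> r'" "s' \<le> s" "(r, s) \<noteq> (r', s')"
    and ia: "p < i" "i < r" "s < a" "a < q"
  shows "Fv T p r s q i a = Fv T p r' s' q i a"
proof -
  have le2: "p \<le> r" "r \<le> r'" "s' \<le> s" "s \<le> q" using le ia by auto
  have qsplit: "\<And>x. qv T (strip_poly p r' s' q) x = qv T (strip_poly r r' s' s) x + qv T (strip_poly p r s q) x"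
    by (rule S1_qv[OF T rs le2])
  have gQ: "Good T (strip_poly r r' s' s)" using S_main[OF T le(1) le(2) _ rs rs'] le(3) by auto
  have Ql: "strip_poly r r' s' s = Up r # (map Up [r+1..r'] @ map Lo [s'..s-1]) @ [Lo s]"
    using sp_decomp(2)[of r r r' s' s s] le by auto
  have seg1: "map Up [i+1..r'] @ map Lo [s'..a-1] =
     map Up [i+1..r-1] @ Up r # (map Up [r+1..r'] @ map Lo [s'..s-1]) @ Lo s # map Lo [s+1..a-1]"
  proof -
    have "[i+1..r'] = [i+1..r-1] @ r # [r+1..r']" using ia le by (simp add: upto_split3)
    moreover have "[s'..a-1] = [s'..s-1] @ s # [s+1..a-1]" using ia le by (simp add: upto_split3)
    ultimately show ?thesis by simp
  qed
  have seg2: "map Up [i+1..r] @ map Lo [s..a-1] = map Up [i+1..r-1] @ Up r # Lo s # map Lo [s+1..a-1]"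
  proof -
    have "[i+1..r] = [i+1..r-1] @ [r]" using ia by (simp add: upto_rec2)
    moreover have "[s..a-1] = s # [s+1..a-1]" using ia by (simp add: upto_rec1)
    ultimately show ?thesis by simp
  qed
  have "prodl (map (qv T (strip_poly p r' s' q)) (map Up [i+1..r'] @ map Lo [s'..a-1]))
      = prodl (map (qv T (strip_poly p r s q)) (map Up [i+1..r] @ map Lo [s..a-1]))"
    unfolding seg1 seg2
  proof (rule glue[where g = "qv T (strip_poly r r' s' s)"])
    show "prodl (map (qv T (strip_poly r r' s' s)) (Up r # (map Up [r + 1..r'] @ map Lo [s'..s - 1]) @ [Lo s])) = mneg I2"
      using gQ unfolding Good_def Ql by blast
    show "\<forall>v\<in>set (map Up [i + 1..r - 1]). qv T (strip_poly p r' s' q) v = qv T (strip_poly p r s q) v"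
      by (auto simp: qsplit intro!: qv_out) (auto simp: strip_poly_def)
    show "\<forall>v\<in>set (map Lo [s + 1..a - 1]). qv T (strip_poly p r' s' q) v = qv T (strip_poly p r s q) v"
      by (auto simp: qsplit intro!: qv_out) (auto simp: strip_poly_def)
    show "\<forall>v\<in>set (map Up [r + 1..r'] @ map Lo [s'..s - 1]). qv T (strip_poly p r' s' q) v = qv T (strip_poly r r' s' s) v"
      by (auto simp: qsplit intro!: qv_out) (auto simp: strip_poly_def)
  qed (auto simp: qsplit)
  then show ?thesis unfolding Fv_def by simp
qed

lemma F_ext_p:
  assumes T: "triangulation T" and pq: "Conn p q \<in> T" and pq': "Conn p' q' \<in> T"
    and le: "p' \<le> p" "q \<le> q'"
    and ia: "p < i" "i < r" "s < a" "a < q"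
  shows "Fv T p r s q i a = Fv T p' r s q' i a"
proof -
  have le2: "p' \<le> p" "p \<le> r" "s \<le> q" "q \<le> q'" using le ia by auto
  have qsplit: "\<And>x. qv T (strip_poly p' r s q') x = qv T (strip_poly p r s q) x + qv T (strip_poly p' p q q') x"
    by (rule S1_qv[OF T pq le2])
  have m: "map (qv T (strip_poly p' r s q')) (map Up [i+1..r] @ map Lo [s..a-1])
      = map (qv T (strip_poly p r s q)) (map Up [i+1..r] @ map Lo [s..a-1])"
    using ia by (auto simp: qsplit intro!: qv_out) (auto simp: strip_poly_def)
  show ?thesis unfolding Fv_def m by (rule refl)
qed

lemma conn_order:
  assumes T: "triangulation T" "Conn p1 q1 \<in> T" "Conn p2 q2 \<in> T"
  shows "(p1 \<le> p2 \<and> q2 \<le> q1) \<or> (p2 \<le> p1 \<and> q1 \<le> q2)"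
proof -
  have "\<not> (p1 - p2) * (q1 - q2) > 0" using tri_nc[OF T] by force
  then show ?thesis by (auto simp: zero_less_mult_iff not_less)
qed

lemma F_nest:
  assumes T: "triangulation T" and pq: "Conn p q \<in> T" and rs: "Conn r s \<in> T"
    and pq': "Conn p' q' \<in> T" and rs': "Conn r' s' \<in> T"
    and le: "p' \<le> p" "q \<le> q'" "r \<le> r'" "s' \<le> s"
    and ia: "p < i" "i < r" "s < a" "a < q"
  shows "Fv T p r s q i a = Fv T p' r' s' q' i a"
proof -
  have "Fv T p r s q i a = Fv T p r' s' q i a"
  proof (cases "(r, s) = (r', s')")
    case False then show ?thesis using F_ext_r[OF T pq rs rs' le(3,4) False ia] by simp
  qed simp
  also have "\<dots> = Fv T p' r' s' q' i a"
    by (rule F_ext_p[OF T pq pq' le(1,2)]) (use ia le in auto)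
  finally show ?thesis .
qed

definition witness :: "arc set \<Rightarrow> int \<Rightarrow> int \<Rightarrow> int \<Rightarrow> int \<Rightarrow> int \<Rightarrow> int \<Rightarrow> bool" where
  "witness T p r s q i a \<longleftrightarrow> Conn p q \<in> T \<and> Conn r s \<in> T \<and> p < i \<and> i < r \<and> s < a \<and> a < q"

lemma F_indep:
  assumes T: "triangulation T" and w1: "witness T p1 r1 s1 q1 i a" and w2: "witness T p2 r2 s2 q2 i a"
  shows "Fv T p1 r1 s1 q1 i a = Fv T p2 r2 s2 q2 i a"
proof -
  have c: "Conn p1 q1 \<in> T" "Conn r1 s1 \<in> T" "Conn p2 q2 \<in> T" "Conn r2 s2 \<in> T"
    using w1 w2 unfolding witness_def by auto
  obtain p3 q3 where p3: "Conn p3 q3 \<in> T" "p3 \<le> p1" "p3 \<le> p2" "q1 \<le> q3" "q2 \<le> q3"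
    using conn_order[OF T c(1) c(3)] c by (metis order_refl)
  obtain r3 s3 where r3: "Conn r3 s3 \<in> T" "r1 \<le> r3" "r2 \<le> r3" "s3 \<le> s1" "s3 \<le> s2"
    using conn_order[OF T c(2) c(4)] c by (metis order_refl)
  have "Fv T p1 r1 s1 q1 i a = Fv T p3 r3 s3 q3 i a"
    by (rule F_nest[OF T c(1,2) p3(1) r3(1)]) (use p3 r3 w1 in \<open>auto simp: witness_def\<close>)
  moreover have "Fv T p2 r2 s2 q2 i a = Fv T p3 r3 s3 q3 i a"
    by (rule F_nest[OF T c(3,4) p3(1) r3(1)]) (use p3 r3 w2 in \<open>auto simp: witness_def\<close>)
  ultimately show ?thesis by simp
qed

lemma Phi_eq:
  assumes T: "triangulation T" and w: "witness T p r s q i a"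
  shows "Phi T i a = Fv T p r s q i a"
proof -
  let ?P = "\<lambda>v. \<exists>p q r s. Conn p q \<in> T \<and> Conn r s \<in> T \<and>
       p < i \<and> i < r \<and> s < a \<and> a < q \<and>
       v = friese (strip_poly p r s q) (poly_diags T (strip_poly p r s q)) (Up i) (Lo a)"
  have ex: "?P (Fv T p r s q i a)" using w friese_F unfolding witness_def by metis
  have "?P (Phi T i a)" unfolding Phi_def by (rule someI[of ?P, OF ex])
  then obtain p' q' r' s' where w': "witness T p' r' s' q' i a"
    and v: "Phi T i a = friese (strip_poly p' r' s' q') (poly_diags T (strip_poly p' r' s' q')) (Up i) (Lo a)"
    unfolding witness_def by blast
  have "Phi T i a = Fv T p' r' s' q' i a" using v friese_F w' unfolding witness_def by metis
  also have "\<dots> = Fv T p r s q i a" by (rule F_indep[OF T w' w])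
  finally show ?thesis .
qed




fun det2 :: "m2 \<Rightarrow> int" where "det2 (Mat a b c d) = a * d - b * c"

lemma det2_mmul: "det2 (mmul A B) = det2 A * det2 B"
  by (cases A; cases B) (simp add: algebra_simps)

lemma det2_prodl: "det2 (prodl xs) = 1"
  by (induction xs) (simp_all add: det2_mmul I2_def MM_def)

lemma alg:
  assumes "det2 X = 1"
  shows "e11 (mmul (mmul X (MM c1)) (MM c0)) + e11 X = c0 * e11 (mmul X (MM c1))"
    and "c0 = e11 (mmul (mmul X (MM c1)) (MM c0)) * e11 (mmul (MM ca) X)
             - e11 (mmul (MM ca) (mmul (mmul X (MM c1)) (MM c0))) * e11 X"
proof -
  obtain e f g h where X: "X = Mat e f g h" by (cases X)
  show "e11 (mmul (mmul X (MM c1)) (MM c0)) + e11 X = c0 * e11 (mmul X (MM c1))"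
    by (simp add: X MM_def algebra_simps)
  have d: "e * h - f * g = 1" using assms X by simp
  have "e11 (mmul (mmul X (MM c1)) (MM c0)) * e11 (mmul (MM ca) X)
             - e11 (mmul (MM ca) (mmul (mmul X (MM c1)) (MM c0))) * e11 X = c0 * (e * h - f * g)"
    by (simp add: X MM_def algebra_simps)
  then show "c0 = e11 (mmul (mmul X (MM c1)) (MM c0)) * e11 (mmul (MM ca) X)
             - e11 (mmul (MM ca) (mmul (mmul X (MM c1)) (MM c0))) * e11 X" using d by simp
qed

lemma edges_mid:
  assumes d: "distinct (X @ u # z # w # Y)"
  shows "{z, t} \<in> poly_edges (X @ u # z # w # Y) \<longleftrightarrow> t = u \<or> t = w"
proof -
  let ?vs = "X @ u # z # w # Y"
  have pe: "poly_edges ?vs = cp (X @ [u]) \<union> {{u, z}, {z, w}} \<union> cp (w # Y) \<union> {{last ?vs, hd ?vs}}"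
    using poly_edges_cp[of ?vs] cp_append[of X u "z # w # Y"] by auto
  have zn1: "z \<notin> set (X @ [u])" "z \<notin> set (w # Y)" using d by auto
  have lst: "last ?vs \<noteq> z" using d by (cases Y) (auto simp: last_append)
  have hd: "hd ?vs \<noteq> z" using d by (cases X) auto
  show ?thesis
  proof
    assume "{z, t} \<in> poly_edges ?vs"
    then consider "{z, t} \<in> cp (X @ [u])" | "{z, t} = {u, z}" | "{z, t} = {z, w}" | "{z, t} \<in> cp (w # Y)"
      | "{z, t} = {last ?vs, hd ?vs}" unfolding pe by blast
    then show "t = u \<or> t = w"
    proof cases
      case 1 then show ?thesis using cp_subset zn1 by blast
    next
      case 2 then show ?thesis by (auto simp: doubleton_eq_iff)
    next
      case 3 then show ?thesis by (auto simp: doubleton_eq_iff)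
    next
      case 4 then show ?thesis using cp_subset zn1 by blast
    next
      case 5 then show ?thesis using lst hd by (auto simp: doubleton_eq_iff)
    qed
  next
    assume "t = u \<or> t = w"
    then show "{z, t} \<in> poly_edges ?vs" unfolding pe by (auto simp: insert_commute)
  qed
qed

fun oth :: "int \<Rightarrow> arc \<Rightarrow> vert" where
  "oth j (Conn p q) = Lo q"
| "oth j (UpA a b) = (if a = j then Up b else Up a)"
| "oth j (LoA a b) = Lo a"

lemma oth_ends: "valid_arc \<alpha> \<Longrightarrow> Up j \<in> ends \<alpha> \<Longrightarrow> ends \<alpha> = {Up j, oth j \<alpha>} \<and> oth j \<alpha> \<noteq> Up j"
  by (cases \<alpha>) auto

lemma oth_inj: "inj_on (oth j) {\<alpha> \<in> T. Up j \<in> ends \<alpha> \<and> valid_arc \<alpha>}"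
proof (rule inj_onI)
  fix \<alpha> \<beta> assume a: "\<alpha> \<in> {\<alpha> \<in> T. Up j \<in> ends \<alpha> \<and> valid_arc \<alpha>}" and b: "\<beta> \<in> {\<alpha> \<in> T. Up j \<in> ends \<alpha> \<and> valid_arc \<alpha>}"
    and e: "oth j \<alpha> = oth j \<beta>"
  have "ends \<alpha> = ends \<beta>" using oth_ends[of \<alpha> j] oth_ends[of \<beta> j] a b e by auto
  then show "\<alpha> = \<beta>" using a b by (cases \<alpha>; cases \<beta>) (auto simp: doubleton_eq_iff)
qed

lemma nb_interior:
  assumes T: "triangulation T" and pq: "Conn p q \<in> T" and rs: "Conn r s \<in> T"
    and j: "p < j" "j < r" and sq: "s \<le> q"
  shows "int (card (nb T (strip_poly p r s q) (Up j))) - 1 = gamma T j"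
proof -
  define Pv where "Pv = strip_poly p r s q"
  define AR where "AR = {\<alpha> \<in> T. Up j \<in> ends \<alpha>}"
  define Oth where "Oth = oth j ` AR"
  have ARv: "AR = {\<alpha> \<in> T. Up j \<in> ends \<alpha> \<and> valid_arc \<alpha>}" unfolding AR_def using tri_valid[OF T] by auto
  have dec: "Pv = map Up [p..j-2] @ Up (j-1) # Up j # Up (j+1) # (map Up [j+2..r] @ map Lo [s..q])"
  proof -
    have h1: "[p..r] = [p..j-2] @ (j-1) # [j..r]" using upto_split3[of p "j-1" r] j by simp
    have h2: "[j..r] = j # (j+1) # [j+2..r]" using j by (simp add: upto_rec1 add.commute)
    show ?thesis unfolding Pv_def strip_poly_def
      by (simp only: h1 h2 list.map map_append append.simps append_assoc)
  qed
  have dist: "distinct Pv" unfolding Pv_def strip_poly_def by (auto simp: distinct_map inj_on_def)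
  have dd: "distinct (map Up [p..j-2] @ Up (j-1) # Up j # Up (j+1) # (map Up [j+2..r] @ map Lo [s..q]))"
    using dist unfolding dec .
  have E: "\<And>t. {Up j, t} \<in> poly_edges Pv \<longleftrightarrow> t = Up (j-1) \<or> t = Up (j+1)"
    unfolding dec by (rule edges_mid[OF dd])
  have inPv: "oth j \<alpha> \<in> set Pv" if a: "\<alpha> \<in> AR" for \<alpha>
  proof -
    have aT: "\<alpha> \<in> T" "Up j \<in> ends \<alpha>" using a unfolding AR_def by auto
    have ncr: "\<not> cross (Conn p q) \<alpha>" "\<not> cross (Conn r s) \<alpha>" using tri_nc[OF T pq aT(1)] tri_nc[OF T rs aT(1)] by auto
    have va: "valid_arc \<alpha>" using tri_valid[OF T aT(1)] .
    show ?thesis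
    proof (cases \<alpha>)
      case (Conn v u)
      then have "v = j" using aT by auto
      then have "u \<le> q" "s \<le> u" using ncr Conn j by (auto simp: zero_less_mult_iff not_less)
      then show ?thesis using Conn unfolding Pv_def strip_poly_def by auto
    next
      case (UpA e f)
      then show ?thesis using aT ncr va j unfolding Pv_def strip_poly_def by auto
    next
      case (LoA e f)
      then show ?thesis using aT by auto
    qed
  qed
  have OthTE: "w \<in> Oth \<longleftrightarrow> {Up j, w} \<in> TE T" for w
  proof
    assume "w \<in> Oth"
    then obtain \<alpha> where al: "\<alpha> \<in> AR" "w = oth j \<alpha>" unfolding Oth_def by auto
    then have aT: "\<alpha> \<in> T" "Up j \<in> ends \<alpha>" unfolding AR_def by auto
    then have "ends \<alpha> = {Up j, w}" using oth_ends[of \<alpha> j] tri_valid[OF T aT(1)] al(2) by simp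
    then show "{Up j, w} \<in> TE T" using aT(1) unfolding TE_iff by blast
  next
    assume "{Up j, w} \<in> TE T"
    then obtain \<alpha> where a: "\<alpha> \<in> T" "ends \<alpha> = {Up j, w}" unfolding TE_iff by auto
    then have "\<alpha> \<in> AR" unfolding AR_def by auto
    moreover have "oth j \<alpha> = w"
    proof -
      have "ends \<alpha> = {Up j, oth j \<alpha>}" "oth j \<alpha> \<noteq> Up j" using oth_ends[of \<alpha> j] tri_valid[OF T a(1)] a by auto
      then show ?thesis using a by (auto simp: doubleton_eq_iff)
    qed
    ultimately show "w \<in> Oth" unfolding Oth_def by auto
  qed
  have OthPv: "Oth \<subseteq> set Pv" using inPv unfolding Oth_def by auto
  have OthNe: "Up j \<notin> Oth"
  proof
    assume "Up j \<in> Oth"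
    then obtain \<alpha> where al: "\<alpha> \<in> AR" "Up j = oth j \<alpha>" unfolding Oth_def by auto
    then have aT: "\<alpha> \<in> T" "Up j \<in> ends \<alpha>" unfolding AR_def by auto
    then show False using oth_ends[of \<alpha> j] tri_valid[OF T aT(1)] al(2) by simp
  qed
  have nbeq: "nb T Pv (Up j) = {Up (j-1), Up (j+1)} \<union> Oth"
  proof -
    have a: "Up (j-1) \<in> set Pv" "Up (j+1) \<in> set Pv" unfolding dec by auto
    show ?thesis
    proof (rule set_eqI)
      fix w
      have "w \<in> nb T Pv (Up j) \<longleftrightarrow> w \<in> set Pv \<and> w \<noteq> Up j \<and> ({Up j, w} \<in> poly_edges Pv \<or> {Up j, w} \<in> TE T)"
        unfolding nb_def Adj_def by simp
      also have "\<dots> \<longleftrightarrow> w \<in> set Pv \<and> w \<noteq> Up j \<and> (w = Up (j-1) \<or> w = Up (j+1) \<or> w \<in> Oth)"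
        using E OthTE by simp
      also have "\<dots> \<longleftrightarrow> w \<in> {Up (j-1), Up (j+1)} \<union> Oth"
        using a OthPv OthNe by auto
      finally show "w \<in> nb T Pv (Up j) \<longleftrightarrow> w \<in> {Up (j-1), Up (j+1)} \<union> Oth" .
    qed
  qed
  have disj: "Up (j-1) \<notin> Oth" "Up (j+1) \<notin> Oth"
  proof -
    { fix t assume t: "t = j - 1 \<or> t = j + 1" and "Up t \<in> Oth"
      then obtain \<alpha> where a: "\<alpha> \<in> T" "ends \<alpha> = {Up j, Up t}" using OthTE unfolding TE_iff by auto
      have "\<alpha> = UpA j t \<or> \<alpha> = UpA t j" using ends_UU[OF a(2)] .
      then have False using tri_valid[OF T a(1)] t by auto }
    then show "Up (j-1) \<notin> Oth" "Up (j+1) \<notin> Oth" by auto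
  qed
  have finO: "finite Oth" using OthPv finite_subset by blast
  have cardO: "card Oth = card AR"
  proof -
    have inj: "inj_on (oth j) AR" using oth_inj[of j T] ARv by simp
    then show ?thesis unfolding Oth_def by (rule card_image)
  qed
  have "card (nb T Pv (Up j)) = 2 + card Oth"
    unfolding nbeq using finO disj by (simp add: card_insert_if)
  then show ?thesis unfolding gamma_def AR_def[symmetric] Pv_def[symmetric] using cardO by simp
qed


theorem mainTheorem13:
  fixes T :: "arc set"
  assumes "triangulation T"
  shows "\<forall>j a. Phi T (j - 1) a + Phi T (j + 1) a = gamma T j * Phi T j a
           \<and> gamma T j = Phi T (j - 1) a * Phi T (j + 1) (a + 1) - Phi T (j - 1) (a + 1) * Phi T (j + 1) a"
proof (intro allI)
  fix j a
  note T = assms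
  obtain p q where pq: "Conn p q \<in> T" "p < j - 1" "q > a + 1"
    using T unfolding triangulation_def by blast
  obtain r s where rs: "Conn r s \<in> T" "r > j + 1" "s < a"
    using T unfolding triangulation_def by blast
  have W: "\<And>i b. i \<in> {j-1, j, j+1} \<Longrightarrow> b \<in> {a, a+1} \<Longrightarrow> Phi T i b = Fv T p r s q i b"
    using pq rs by (intro Phi_eq[OF T]) (auto simp: witness_def)
  define c where "c = qv T (strip_poly p r s q)"
  define E where "E = map Up [j+2..r] @ map Lo [s..a-1]"
  define X where "X = prodl (map c E)"
  have u1: "[j+1..r] = (j+1) # [j+2..r]" using rs by (simp add: upto_rec1 add.commute)
  have u2: "[j..r] = j # (j+1) # [j+2..r]" using rs by (simp add: upto_rec1 add.commute)
  have u3: "[s..a] = [s..a-1] @ [a]" using rs by (simp add: upto_rec2)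
  have L1: "map Up [j+1+1..r] @ map Lo [s..a-1] = E" unfolding E_def by (simp add: add.assoc)
  have L2: "map Up [j+1..r] @ map Lo [s..a-1] = Up (j+1) # E" unfolding E_def u1 by simp
  have L3: "map Up [j-1+1..r] @ map Lo [s..a-1] = Up j # Up (j+1) # E" unfolding E_def by (simp add: u2)
  have L4: "map Up [j+1+1..r] @ map Lo [s..a+1-1] = E @ [Lo a]" unfolding E_def by (simp add: add.assoc u3)
  have L5: "map Up [j-1+1..r] @ map Lo [s..a+1-1] = Up j # Up (j+1) # E @ [Lo a]"
    unfolding E_def by (simp add: u2 u3)
  have f1: "Phi T (j+1) a = e11 X" using W[of "j+1" a] unfolding Fv_def L1 X_def c_def by simp
  have f2: "Phi T j a = e11 (mmul X (MM (c (Up (j+1)))))"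
    using W[of j a] unfolding Fv_def L2 X_def c_def by simp
  have f3: "Phi T (j-1) a = e11 (mmul (mmul X (MM (c (Up (j+1))))) (MM (c (Up j))))"
    using W[of "j-1" a] unfolding Fv_def L3 X_def c_def by (simp add: mmul_assoc)
  have f4: "Phi T (j+1) (a+1) = e11 (mmul (MM (c (Lo a))) X)"
    using W[of "j+1" "a+1"] unfolding Fv_def L4 X_def c_def by (simp add: prodl_snoc)
  have f5: "Phi T (j-1) (a+1) = e11 (mmul (MM (c (Lo a))) (mmul (mmul X (MM (c (Up (j+1))))) (MM (c (Up j)))))"
    using W[of "j-1" "a+1"] unfolding Fv_def L5 X_def c_def by (simp add: prodl_append mmul_assoc)
  have dX: "det2 X = 1" unfolding X_def by (rule det2_prodl)
  have g: "gamma T j = c (Up j)"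
  proof -
    have G: "Good T (strip_poly p r s q)" by (rule S_main[OF T]) (use pq rs in auto)
    have "Up j \<in> set (strip_poly p r s q)" using pq rs unfolding strip_poly_def by auto
    then have "c (Up j) = int (card (nb T (strip_poly p r s q) (Up j))) - 1"
      using G unfolding Good_def c_def by blast
    also have "\<dots> = gamma T j" by (rule nb_interior[OF T pq(1) rs(1)]) (use pq rs in auto)
    finally show ?thesis by simp
  qed
  show "Phi T (j - 1) a + Phi T (j + 1) a = gamma T j * Phi T j a
           \<and> gamma T j = Phi T (j - 1) a * Phi T (j + 1) (a + 1) - Phi T (j - 1) (a + 1) * Phi T (j + 1) a"
    unfolding f1 f2 f3 f4 f5 g using alg(1)[OF dX, of "c (Up (j+1))" "c (Up j)"] alg(2)[OF dX, of "c (Up j)" "c (Up (j+1))" "c (Lo a)"] by simp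
qed


end
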